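(* Let $p$ be a prime and let $e\geq 2$ and $d\geq 2$ be integers. Let $\mathcal P(p^e,d)\subset\mathbb R^d$ be the convex hull of all $d$-dimensional vector-factorisations of $p^e$. Then $\mathcal P(p^e,d)$ is the set of $(x_1,\dots,x_d)\in\mathbb R^d$ satisfying the inequalities $$\sum_{i=1}^dx_i\leq (d-1)+p^e,$$ $$x_i\geq 1,\quad i=1,\dots,d,$$ $$\sum_{i=1}^d p^{\alpha_i}x_i\geq\lambda p^{\mu(\alpha)+1}+(d-\lambda)p^{\mu(\alpha)}\quad\text{for all }\alpha=(\alpha_1,\dots,\alpha_d)\in\mathcal R_\lambda(d,e),$$ for all $\lambda\in\{1,\dots,\min(e,d-1)\}$. This list of inequalities is minimal (no inequality can be removed) if $d\geq 3$. For $d=2$, the minimal list is obtained by removing the two inequalities $x_1\geq 1$ and $x_2\geq 1$.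
   Context: $\mathbb N=\{0,1,2,\dots\}$. A $d$-dimensional vector-factorisation of an integer $N\geq1$ is an integral vector $(v_1,\dots,v_d)\in\mathbb N^d$ with $v_1v_2\cdots v_d=N$. For $\lambda\in\{1,\dots,\min(e,d-1)\}$, $\mathcal R_\lambda(d,e)$ (regular vectors of type $\lambda$) is the set of all $\alpha=(\alpha_1,\dots,\alpha_d)\in\mathbb N^d$ such that $\min(\alpha_1,\dots,\alpha_d)=0$, $\max(\alpha_1,\dots,\alpha_d)\, d<e+\sum_{i=1}^d\alpha_i$, and $e+\sum_{i=1}^d\alpha_i\equiv\lambda\pmod d$. For $\alpha\in\mathcal R_\lambda(d,e)$, $\mu(\alpha)$ is the natural integer defined by $\mu(\alpha)d+\lambda=e+\sum_{i=1}^d\alpha_i$, i.e. $\mu(\alpha)=\lfloor (e+\sum_i\alpha_i)/d\rfloor$. *)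

theory Defs
  imports "HOL-Analysis.Analysis"
begin

text \<open>Dimension d is CARD('n); points of R^d are of type real^'n,
  integral vectors alpha in N^d are functions 'n => nat.\<close>

definition vector_factorisations :: "nat \<Rightarrow> (real^'n) set" where
  "vector_factorisations N =
     {x. \<exists>v::'n \<Rightarrow> nat. (\<forall>i. x $ i = real (v i)) \<and> (\<Prod>i\<in>UNIV. v i) = N}"

definition regular_vectors :: "nat \<Rightarrow> nat \<Rightarrow> ('n::finite \<Rightarrow> nat) set" where
  "regular_vectors lam e =
     {\<alpha>. Min (range \<alpha>) = 0
        \<and> Max (range \<alpha>) * CARD('n) < e + (\<Sum>i\<in>UNIV. \<alpha> i)
        \<and> (e + (\<Sum>i\<in>UNIV. \<alpha> i)) mod CARD('n) = lam mod CARD('n)}"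

definition mu :: "nat \<Rightarrow> ('n::finite \<Rightarrow> nat) \<Rightarrow> nat" where
  "mu e \<alpha> = (e + (\<Sum>i\<in>UNIV. \<alpha> i)) div CARD('n)"

datatype 'n ineq = SumIneq | LowIneq 'n | RegIneq nat "'n \<Rightarrow> nat"

fun holds :: "nat \<Rightarrow> nat \<Rightarrow> ('n::finite) ineq \<Rightarrow> real^'n \<Rightarrow> bool" where
  "holds p e SumIneq x =
     ((\<Sum>i\<in>UNIV. x $ i) \<le> real (CARD('n) - 1) + real p ^ e)"
| "holds p e (LowIneq i) x = (x $ i \<ge> 1)"
| "holds p e (RegIneq lam \<alpha>) x =
     ((\<Sum>i\<in>UNIV. real p ^ \<alpha> i * x $ i) \<ge>
        real lam * real p ^ (mu e \<alpha> + 1) + real (CARD('n) - lam) * real p ^ (mu e \<alpha>))"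

definition ineq_list :: "nat \<Rightarrow> ('n::finite) ineq set" where
  "ineq_list e = {SumIneq} \<union> range LowIneq \<union>
     {RegIneq lam \<alpha> | lam \<alpha>. lam \<in> {1..min e (CARD('n) - 1)} \<and> \<alpha> \<in> regular_vectors lam e}"

definition polyh :: "nat \<Rightarrow> nat \<Rightarrow> ('n::finite) ineq set \<Rightarrow> (real^'n) set" where
  "polyh p e J = {x. \<forall>j\<in>J. holds p e j x}"

end

theory Submission
  imports Defs "HOL-Computational_Algebra.Primes" "HOL-Library.FuncSet"
begin


definition pv :: "nat \<Rightarrow> ('n::finite \<Rightarrow> nat) \<Rightarrow> real^'n" where
  "pv p \<beta> = (\<chi> i. real p ^ \<beta> i)"

definition BB :: "nat \<Rightarrow> ('n::finite \<Rightarrow> nat) set" where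
  "BB e = {\<beta>. (\<Sum>i\<in>UNIV. \<beta> i) = e}"

lemma pv_nth[simp]: "pv p \<beta> $ i = real p ^ \<beta> i"
  by (simp add: pv_def)

lemma finite_BB: "finite (BB e :: ('n::finite \<Rightarrow> nat) set)"
proof -
  have "BB e \<subseteq> Pi\<^sub>E UNIV (\<lambda>_. {..e})"
    unfolding BB_def PiE_UNIV_domain
    by (auto intro!: member_le_sum simp: Pi_def)
  moreover have "finite (Pi\<^sub>E (UNIV::'n set) (\<lambda>_. {..e}))"
    by (rule finite_PiE) auto
  ultimately show ?thesis by (rule finite_subset)
qed

lemma VF:
  assumes "prime p"
  shows "vector_factorisations (p ^ e) = (pv p ` BB e :: (real^'n::finite) set)"
proof
  show "vector_factorisations (p ^ e) \<subseteq> (pv p ` BB e :: (real^'n::finite) set)"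
  proof
    fix x :: "real^'n" assume "x \<in> vector_factorisations (p ^ e)"
    then obtain v :: "'n \<Rightarrow> nat" where v: "\<forall>i. x $ i = real (v i)" "(\<Prod>i\<in>UNIV. v i) = p ^ e"
      unfolding vector_factorisations_def by auto
    have "\<forall>i. \<exists>k. v i = p ^ k"
    proof
      fix i
      have "v i dvd p ^ e" using v(2) by (metis dvd_prodI finite UNIV_I)
      then show "\<exists>k. v i = p ^ k" using divides_primepow_nat[OF assms] by auto
    qed
    then obtain \<beta> where b: "\<forall>i. v i = p ^ \<beta> i" by metis
    have "p ^ (\<Sum>i\<in>UNIV. \<beta> i) = p ^ e" using v(2) b by (simp add: power_sum)
    then have "(\<Sum>i\<in>UNIV. \<beta> i) = e"
      using assms prime_gt_1_nat power_inject_exp by blast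
    moreover have "x = pv p \<beta>" using v(1) b by (simp add: vec_eq_iff)
    ultimately show "x \<in> pv p ` BB e" unfolding BB_def by auto
  qed
next
  show "(pv p ` BB e :: (real^'n::finite) set) \<subseteq> vector_factorisations (p ^ e)"
  proof
    fix x :: "real^'n" assume "x \<in> pv p ` BB e"
    then obtain \<beta> where b: "(\<Sum>i\<in>UNIV. \<beta> i) = e" "x = pv p \<beta>" unfolding BB_def by auto
    show "x \<in> vector_factorisations (p ^ e)"
      unfolding vector_factorisations_def
      by (rule CollectI, rule exI[of _ "\<lambda>i. p ^ \<beta> i"]) (simp add: b(2) power_sum[symmetric] b(1))
  qed
qed


lemma pow_add_le: "(p::nat) \<ge> 1 \<Longrightarrow> p ^ a + p ^ b \<le> 1 + p ^ (a + b)"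
proof -
  assume p: "p \<ge> 1"
  have "p ^ a \<ge> 1" "p ^ b \<ge> 1" using p by auto
  then obtain A B where "p ^ a = A + 1" "p ^ b = B + 1"
    by (metis add.commute le_add_diff_inverse)
  then show ?thesis by (simp add: power_add algebra_simps)
qed

lemma sum_pow_le:
  assumes "finite A" "A \<noteq> {}" "(p::nat) \<ge> 1"
  shows "(\<Sum>i\<in>A. p ^ \<beta> i) \<le> (card A - 1) + p ^ (\<Sum>i\<in>A. \<beta> i)"
  using assms(1,2)
proof (induction A rule: finite_ne_induct)
  case (singleton x)
  then show ?case by simp
next
  case (insert x F)
  have c: "card F \<ge> 1" using insert by (simp add: Suc_leI card_gt_0_iff)
  have "(\<Sum>i\<in>insert x F. p ^ \<beta> i) = p ^ \<beta> x + (\<Sum>i\<in>F. p ^ \<beta> i)" using insert by simp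
  also have "\<dots> \<le> p ^ \<beta> x + ((card F - 1) + p ^ (\<Sum>i\<in>F. \<beta> i))" using insert by simp
  also have "\<dots> \<le> card F + p ^ (\<beta> x + (\<Sum>i\<in>F. \<beta> i))"
    using pow_add_le[OF assms(3), of "\<beta> x" "\<Sum>i\<in>F. \<beta> i"] c by linarith
  finally show ?case using insert by simp
qed


lemma bern:
  assumes "(p::int) \<ge> 2"
  shows "p ^ k \<ge> 1 + int k * (p - 1) \<and> (k \<ge> 2 \<longrightarrow> p ^ k > 1 + int k * (p - 1))"
proof (induction k)
  case 0
  then show ?case by simp
next
  case (Suc k)
  have pk: "p ^ k \<ge> 1" using assms by simp
  have e1: "p ^ Suc k = p ^ k + (p - 1) * p ^ k" by (simp add: left_diff_distrib)
  have e2: "int (Suc k) * (p - 1) = int k * (p - 1) + (p - 1)" by (simp add: distrib_right)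
  have m1: "(p - 1) * p ^ k \<ge> p - 1" using pk assms mult_left_mono[of 1 "p ^ k" "p - 1"] by simp
  have a: "p ^ Suc k \<ge> 1 + int (Suc k) * (p - 1)" using Suc.IH[THEN conjunct1] m1 e1 e2 by linarith
  have b: "Suc k \<ge> 2 \<longrightarrow> p ^ Suc k > 1 + int (Suc k) * (p - 1)"
  proof
    assume "Suc k \<ge> 2"
    then have "k \<ge> 1" by simp
    then have "p ^ k \<ge> p ^ 1" using assms by (intro power_increasing) auto
    then have "(p - 1) * p ^ k \<ge> (p - 1) * p" using assms by (intro mult_left_mono) auto
    moreover have "(p - 1) * p \<ge> 2 * p - 2" using assms mult_left_mono[of 2 p "p - 1"] by (simp add: algebra_simps)
    ultimately show "p ^ Suc k > 1 + int (Suc k) * (p - 1)" using Suc.IH[THEN conjunct1] e1 e2 assms by linarith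
  qed
  show ?case using a b by blast
qed

lemma tangent_main:
  assumes "(p::int) \<ge> 2"
  shows "p ^ g \<ge> p ^ m * (1 + (int g - int m) * (p - 1)) \<and>
     (g \<noteq> m \<longrightarrow> g \<noteq> m + 1 \<longrightarrow> p ^ g > p ^ m * (1 + (int g - int m) * (p - 1)))"
proof (cases "g \<ge> m")
  case True
  have pm: "p ^ m > 0" using assms by simp
  obtain k where k: "g = m + k" using True le_Suc_ex by blast
  have e: "p ^ g = p ^ m * p ^ k" using k by (simp add: power_add)
  have e2: "int g - int m = int k" using k by simp
  have b: "p ^ k \<ge> 1 + int k * (p - 1) \<and> (k \<ge> 2 \<longrightarrow> p ^ k > 1 + int k * (p - 1))"
    by (rule bern[OF assms])
  have s1: "p ^ m * (1 + int k * (p - 1)) \<le> p ^ m * p ^ k"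
    using b pm by (intro mult_left_mono) auto
  have s2: "p ^ m * (1 + int k * (p - 1)) < p ^ m * p ^ k" if "k \<ge> 2"
    using b pm that by (intro mult_strict_left_mono) auto
  show ?thesis using s1 s2 e e2 k by auto
next
  case False
  have pm: "p ^ m > 0" using assms by simp
  have "(int m - int g) * (p - 1) \<ge> 1 * 1"
    using False assms by (intro mult_mono) auto
  then have "1 + (int g - int m) * (p - 1) \<le> 0" by (simp add: algebra_simps)
  then have "p ^ m * (1 + (int g - int m) * (p - 1)) \<le> 0" using pm
    by (simp add: mult_nonneg_nonpos)
  moreover have "p ^ g > 0" using assms by simp
  ultimately show ?thesis by auto
qed


lemma reg_basic:
  fixes \<alpha> :: "'n::finite \<Rightarrow> nat"
  assumes "\<alpha> \<in> regular_vectors lam e" "lam \<in> {1..min e (CARD('n) - 1)}"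
  shows "e + (\<Sum>i\<in>UNIV. \<alpha> i) = mu e \<alpha> * CARD('n) + lam"
    and "\<And>i. \<alpha> i \<le> mu e \<alpha>"
proof -
  let ?d = "CARD('n)"
  have r: "Min (range \<alpha>) = 0" "Max (range \<alpha>) * ?d < e + (\<Sum>i\<in>UNIV. \<alpha> i)"
     "(e + (\<Sum>i\<in>UNIV. \<alpha> i)) mod ?d = lam mod ?d"
    using assms(1) unfolding regular_vectors_def by auto
  have lam: "lam < ?d" "lam \<ge> 1" using assms(2) by auto
  then have "lam mod ?d = lam" by simp
  then show e: "e + (\<Sum>i\<in>UNIV. \<alpha> i) = mu e \<alpha> * ?d + lam"
    using r(3) unfolding mu_def by (metis div_mult_mod_eq)
  fix i
  have "\<alpha> i \<le> Max (range \<alpha>)" by simp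
  then have "\<alpha> i * ?d \<le> Max (range \<alpha>) * ?d" by simp
  also have "\<dots> < mu e \<alpha> * ?d + ?d" using r(2) e lam by linarith
  finally have "\<alpha> i * ?d < (mu e \<alpha> + 1) * ?d" by (simp add: algebra_simps)
  then show "\<alpha> i \<le> mu e \<alpha>" by (metis Suc_eq_plus1 less_Suc_eq_le mult_less_cancel2)
qed

lemma reg_max_lt:
  fixes \<alpha> :: "'n::finite \<Rightarrow> nat"
  assumes "\<alpha> \<in> regular_vectors lam e"
  shows "\<alpha> i < e"
proof -
  let ?d = "CARD('n)"
  have r: "Min (range \<alpha>) = 0" "Max (range \<alpha>) * ?d < e + (\<Sum>i\<in>UNIV. \<alpha> i)"
    using assms(1) unfolding regular_vectors_def by auto
  obtain j where j: "\<alpha> j = 0" using r(1) Min_in[of "range \<alpha>"] by auto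
  let ?M = "Max (range \<alpha>)"
  have "(\<Sum>i\<in>UNIV. \<alpha> i) = (\<Sum>i\<in>UNIV - {j}. \<alpha> i)"
    using j by (simp add: sum.remove[of UNIV j])
  also have "\<dots> \<le> (\<Sum>i\<in>UNIV - {j}. ?M)" by (intro sum_mono) simp
  also have "\<dots> = (?d - 1) * ?M" by simp
  finally have "(\<Sum>i\<in>UNIV. \<alpha> i) \<le> (?d - 1) * ?M" .
  then have "?M * ?d < e + (?d - 1) * ?M" using r(2) by linarith
  moreover have "?d \<ge> 1" by (simp add: Suc_leI)
  moreover have "(?d - 1) * ?M = ?d * ?M - ?M" by (simp add: diff_mult_distrib)
  moreover have "?M \<le> ?d * ?M" using \<open>?d \<ge> 1\<close> by (metis mult_1 mult_le_mono1)
  moreover have "?M * ?d = ?d * ?M" by simp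
  ultimately have "?M < e" by linarith
  moreover have "\<alpha> i \<le> ?M" by simp
  ultimately show ?thesis by linarith
qed


lemma sum_tangent:
  fixes \<gamma> :: "'n::finite \<Rightarrow> nat"
  assumes p: "(p::int) \<ge> 2" and s: "(\<Sum>i\<in>UNIV. \<gamma> i) = m * CARD('n) + lam" and lam: "lam \<le> CARD('n)"
  shows "(\<Sum>i\<in>UNIV. p ^ \<gamma> i) \<ge> int lam * p ^ (m + 1) + int (CARD('n) - lam) * p ^ m"
    and "(\<Sum>i\<in>UNIV. p ^ \<gamma> i) = int lam * p ^ (m + 1) + int (CARD('n) - lam) * p ^ m
          \<Longrightarrow> \<forall>i. \<gamma> i = m \<or> \<gamma> i = m + 1"
proof -
  let ?d = "CARD('n)"
  define T where "T i = p ^ m * (1 + (int (\<gamma> i) - int m) * (p - 1))" for i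
  have T: "\<And>i. p ^ \<gamma> i \<ge> T i" unfolding T_def using tangent_main[OF p] by blast
  have Ts: "\<And>i. \<gamma> i \<noteq> m \<Longrightarrow> \<gamma> i \<noteq> m + 1 \<Longrightarrow> p ^ \<gamma> i > T i"
    unfolding T_def using tangent_main[OF p] by blast
  have "(\<Sum>i\<in>UNIV. T i) = p ^ m * (\<Sum>i\<in>UNIV. (1 + (int (\<gamma> i) - int m) * (p - 1)))"
    unfolding T_def by (simp only: sum_distrib_left)
  also have "(\<Sum>i\<in>UNIV. (1 + (int (\<gamma> i) - int m) * (p - 1)))
      = int ?d + (int (\<Sum>i\<in>UNIV. \<gamma> i) - int ?d * int m) * (p - 1)"
    apply (simp only: sum.distrib sum_distrib_right[symmetric] sum_subtractf of_nat_sum)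
    apply simp
    done
  also have "int (\<Sum>i\<in>UNIV. \<gamma> i) - int ?d * int m = int lam" using s by simp
  also have "p ^ m * (int ?d + int lam * (p - 1)) = int lam * p ^ (m + 1) + int (?d - lam) * p ^ m"
    using lam apply (simp add: of_nat_diff)
    apply (simp add: algebra_simps)
    done
  finally have sT: "(\<Sum>i\<in>UNIV. T i) = int lam * p ^ (m + 1) + int (?d - lam) * p ^ m" .
  have ge: "(\<Sum>i\<in>UNIV. p ^ \<gamma> i) \<ge> (\<Sum>i\<in>UNIV. T i)" using T by (intro sum_mono) auto
  then show "(\<Sum>i\<in>UNIV. p ^ \<gamma> i) \<ge> int lam * p ^ (m + 1) + int (CARD('n) - lam) * p ^ m"
    using sT by simp
  assume eq: "(\<Sum>i\<in>UNIV. p ^ \<gamma> i) = int lam * p ^ (m + 1) + int (CARD('n) - lam) * p ^ m"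
  have "(\<Sum>i\<in>UNIV. p ^ \<gamma> i - T i) = 0" using eq sT by (simp only: sum_subtractf)
  moreover have "\<forall>i\<in>UNIV. p ^ \<gamma> i - T i \<ge> 0" using T by auto
  ultimately have z: "\<forall>i\<in>UNIV. p ^ \<gamma> i - T i = 0"
    using sum_nonneg_eq_0_iff[of UNIV "\<lambda>i. p ^ \<gamma> i - T i"] by simp
  show "\<forall>i. \<gamma> i = m \<or> \<gamma> i = m + 1"
  proof
    fix i
    have "p ^ \<gamma> i = T i" using z by simp
    then show "\<gamma> i = m \<or> \<gamma> i = m + 1" using Ts[of i] by fastforce
  qed
qed


definition LI :: "nat \<Rightarrow> ('n::finite \<Rightarrow> nat) \<Rightarrow> ('n \<Rightarrow> nat) \<Rightarrow> int" where
  "LI p \<alpha> \<beta> = (\<Sum>i\<in>UNIV. int p ^ (\<alpha> i + \<beta> i))"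

definition RI :: "nat \<Rightarrow> nat \<Rightarrow> nat \<Rightarrow> ('n::finite \<Rightarrow> nat) \<Rightarrow> int" where
  "RI p e lam \<alpha> = int lam * int p ^ (mu e \<alpha> + 1) + int (CARD('n) - lam) * int p ^ (mu e \<alpha>)"

lemma holds_Reg_pv:
  fixes \<alpha> :: "'n::finite \<Rightarrow> nat"
  shows "holds p e (RegIneq lam \<alpha>) (pv p \<beta>) \<longleftrightarrow> RI p e lam \<alpha> \<le> LI p \<alpha> \<beta>"
proof -
  have a: "(\<Sum>i\<in>UNIV. real p ^ \<alpha> i * pv p \<beta> $ i) = real_of_int (LI p \<alpha> \<beta>)"
    by (simp add: LI_def power_add)
  have b: "real lam * real p ^ (mu e \<alpha> + 1) + real (CARD('n) - lam) * real p ^ (mu e \<alpha>)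
      = real_of_int (RI p e lam \<alpha>)" by (simp add: RI_def)
  show ?thesis by (simp only: holds.simps a b of_int_le_iff)
qed

lemma reg_vertex:
  fixes \<alpha> \<beta> :: "'n::finite \<Rightarrow> nat"
  assumes p: "p \<ge> 2" and a: "\<alpha> \<in> regular_vectors lam e" and lam: "lam \<in> {1..min e (CARD('n) - 1)}"
    and b: "\<beta> \<in> BB e"
  shows "RI p e lam \<alpha> \<le> LI p \<alpha> \<beta>"
    and "RI p e lam \<alpha> = LI p \<alpha> \<beta> \<Longrightarrow> \<forall>i. \<alpha> i + \<beta> i = mu e \<alpha> \<or> \<alpha> i + \<beta> i = mu e \<alpha> + 1"
proof -
  have s: "(\<Sum>i\<in>UNIV. \<alpha> i + \<beta> i) = mu e \<alpha> * CARD('n) + lam"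
    using reg_basic(1)[OF a lam] b unfolding BB_def by (simp add: sum.distrib)
  have p': "int p \<ge> 2" using p by simp
  have l: "lam \<le> CARD('n)" using lam by auto
  note st = sum_tangent[OF p' s l]
  show "RI p e lam \<alpha> \<le> LI p \<alpha> \<beta>" using st(1) unfolding RI_def LI_def by simp
  show "RI p e lam \<alpha> = LI p \<alpha> \<beta> \<Longrightarrow> \<forall>i. \<alpha> i + \<beta> i = mu e \<alpha> \<or> \<alpha> i + \<beta> i = mu e \<alpha> + 1"
    using st(2) unfolding RI_def LI_def by simp
qed

lemma vertex_in_polyh:
  fixes \<beta> :: "'n::finite \<Rightarrow> nat"
  assumes p: "p \<ge> 2" and b: "\<beta> \<in> BB e" and j: "j \<in> ineq_list e"
  shows "holds p e j (pv p \<beta>)"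
proof -
  have sb: "(\<Sum>i\<in>UNIV. \<beta> i) = e" using b unfolding BB_def by simp
  consider "j = SumIneq" | i where "j = LowIneq i"
    | lam \<alpha> where "j = RegIneq lam \<alpha>" "lam \<in> {1..min e (CARD('n) - 1)}" "\<alpha> \<in> regular_vectors lam e"
    using j unfolding ineq_list_def by auto
  then show ?thesis
  proof cases
    case 1
    have "(\<Sum>i\<in>UNIV. p ^ \<beta> i) \<le> (CARD('n) - 1) + p ^ e"
      using sum_pow_le[of "UNIV::'n set" p \<beta>] p sb by simp
    have B: "real (\<Sum>i\<in>UNIV. p ^ \<beta> i) = (\<Sum>i\<in>UNIV. real p ^ \<beta> i)" by (simp add: of_nat_sum)
    have d1: "CARD('n) \<ge> 1" by (simp add: Suc_leI)
    have C: "real ((CARD('n) - 1) + p ^ e) = real CARD('n) - 1 + real p ^ e" by (simp only: of_nat_add of_nat_diff[OF d1] of_nat_power of_nat_1)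
    have "(\<Sum>i\<in>UNIV. real p ^ \<beta> i) \<le> real CARD('n) - 1 + real p ^ e"
      using \<open>(\<Sum>i\<in>UNIV. p ^ \<beta> i) \<le> (CARD('n) - 1) + p ^ e\<close> B C by (metis of_nat_le_iff)
    then show ?thesis using 1 d1 by (simp add: of_nat_diff)
  next
    case 2
    then show ?thesis using p by simp
  next
    case 3
    then show ?thesis using reg_vertex(1)[OF p 3(3) 3(2) b] holds_Reg_pv[of p e lam \<alpha> \<beta>] by simp
  qed
qed

lemma holds_halfspace:
  "\<exists>a b. {x. holds p e j x} = {x. inner a x \<le> b} \<or> {x. holds p e j x} = {x. inner a x \<ge> b}"
proof (cases j)
  case SumIneq
  have "{x. holds p e j x} = {x::real^'a. inner (\<chi> i. 1) x \<le> real (CARD('a) - 1) + real p ^ e}"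
    using SumIneq by (simp add: inner_vec_def)
  then show ?thesis by blast
next
  case (LowIneq i)
  have "{x. holds p e j x} = {x::real^'a. inner (axis i 1) x \<ge> 1}"
    using LowIneq by (simp add: inner_axis inner_commute)
  then show ?thesis by blast
next
  case (RegIneq lam \<alpha>)
  have "{x. holds p e j x} = {x::real^'a. inner (\<chi> i. real p ^ \<alpha> i) x \<ge>
      real lam * real p ^ (mu e \<alpha> + 1) + real (CARD('a) - lam) * real p ^ (mu e \<alpha>)}"
    using RegIneq by (simp add: inner_vec_def)
  then show ?thesis by blast
qed

lemma convex_holds: "convex {x. holds p e j x}"
  using holds_halfspace[of p e j] convex_halfspace_le convex_halfspace_ge by metis

lemma polyh_Inter: "polyh p e J = (\<Inter>j\<in>J. {x. holds p e j x})"
  unfolding polyh_def by auto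

lemma convex_polyh: "convex (polyh p e J)"
  unfolding polyh_Inter by (intro convex_INT convex_holds)

lemma polyh_anti: "J \<subseteq> K \<Longrightarrow> polyh p e K \<subseteq> polyh p e J"
  unfolding polyh_def by auto

lemma partA:
  assumes p: "p \<ge> 2"
  shows "convex hull (pv p ` BB e :: (real^'n::finite) set) \<subseteq> polyh p e (ineq_list e)"
proof (rule hull_minimal)
  show "pv p ` BB e \<subseteq> polyh p e (ineq_list e)"
    using vertex_in_polyh[OF p] unfolding polyh_def by auto
  show "convex (polyh p e (ineq_list e))" by (rule convex_polyh)
qed


lemma sum_if_card:
  fixes T :: "'n::finite set" and a b :: real
  shows "(\<Sum>i\<in>UNIV. if i \<in> T then a else b) = real (card T) * a + real (CARD('n) - card T) * b"
proof -
  have "(\<Sum>i\<in>UNIV. if i \<in> T then a else b) = (\<Sum>i\<in>T. a) + (\<Sum>i\<in>- T. b)"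
    by (simp add: sum.If_cases)
  also have "\<dots> = real (card T) * a + real (card (- T)) * b" by simp
  also have "card (- T) = CARD('n) - card T"
    by (metis Compl_eq_Diff_UNIV card_Diff_subset finite subset_UNIV)
  finally show ?thesis .
qed

lemma I_proper:
  fixes \<beta> :: "'n::finite \<Rightarrow> nat" and x :: "real^'n"
  assumes p: "p \<ge> 2" and b: "\<beta> \<in> BB e" and x: "x \<in> polyh p e (ineq_list e)"
    and TS: "T \<subseteq> {i. \<beta> i \<ge> 1}" and Tne: "T \<noteq> {}" and TU: "T \<noteq> UNIV"
  shows "(\<Sum>i\<in>UNIV. (if i \<in> T then real p else 1) * x $ i / real p ^ \<beta> i)
           \<ge> (\<Sum>i\<in>UNIV. (if i \<in> T then real p else 1))"
proof -
  let ?d = "CARD('n)"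
  define \<epsilon> where "\<epsilon> i = (if i \<in> T then 1 else 0::nat)" for i
  define \<delta> where "\<delta> i = \<beta> i - \<epsilon> i" for i
  define \<mu> where "\<mu> = Max (range \<delta>)"
  define \<alpha> where "\<alpha> i = \<mu> - \<delta> i" for i
  define lam where "lam = card T"
  have dle: "\<delta> i \<le> \<mu>" for i unfolding \<mu>_def by simp
  have be: "\<beta> i \<ge> \<epsilon> i" for i using TS unfolding \<epsilon>_def by auto
  have ab: "\<alpha> i + \<beta> i = \<mu> + \<epsilon> i" for i
    using dle[of i] be[of i] unfolding \<alpha>_def \<delta>_def by simp
  have lam1: "lam \<ge> 1" using Tne unfolding lam_def by (simp add: Suc_leI card_gt_0_iff)
  have lamd: "lam < ?d" using TU unfolding lam_def by (simp add: psubset_card_mono psubsetI)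
  have sb: "(\<Sum>i\<in>UNIV. \<beta> i) = e" using b unfolding BB_def by simp
  have "lam \<le> card {i. \<beta> i \<ge> 1}" unfolding lam_def using TS by (intro card_mono) auto
  also have "card {i. \<beta> i \<ge> 1} = (\<Sum>i\<in>{i. \<beta> i \<ge> 1}. 1)" by simp
  also have "\<dots> \<le> (\<Sum>i\<in>{i. \<beta> i \<ge> 1}. \<beta> i)" by (intro sum_mono) auto
  also have "\<dots> \<le> (\<Sum>i\<in>UNIV. \<beta> i)" by (intro sum_mono2) auto
  finally have lame: "lam \<le> e" using sb by simp
  have se: "(\<Sum>i\<in>UNIV. \<epsilon> i) = lam" unfolding \<epsilon>_def lam_def
    by (simp add: sum.If_cases)
  have "(\<Sum>i\<in>UNIV. \<alpha> i) + e = (\<Sum>i\<in>UNIV. \<alpha> i + \<beta> i)" using sb by (simp add: sum.distrib)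
  also have "\<dots> = (\<Sum>i\<in>UNIV. \<mu> + \<epsilon> i)" using ab by simp
  also have "\<dots> = \<mu> * ?d + lam" using se by (simp add: sum.distrib)
  finally have esum: "e + (\<Sum>i\<in>UNIV. \<alpha> i) = \<mu> * ?d + lam" by simp
  have "Max (range \<delta>) \<in> range \<delta>" by (rule Max_in) auto
  then obtain j0 where "Max (range \<delta>) = \<delta> j0" by blast
  then have j0: "\<delta> j0 = \<mu>" unfolding \<mu>_def by simp
  have "Min (range \<alpha>) \<le> \<alpha> j0" by simp
  then have m0: "Min (range \<alpha>) = 0" using j0 unfolding \<alpha>_def by simp
  have "Max (range \<alpha>) \<le> \<mu>" unfolding \<alpha>_def by auto
  then have "Max (range \<alpha>) * ?d \<le> \<mu> * ?d" by simp
  then have m1: "Max (range \<alpha>) * ?d < e + (\<Sum>i\<in>UNIV. \<alpha> i)" using esum lam1 by linarith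
  have m2: "(e + (\<Sum>i\<in>UNIV. \<alpha> i)) mod ?d = lam mod ?d" using esum by simp
  have reg: "\<alpha> \<in> regular_vectors lam e" unfolding regular_vectors_def using m0 m1 m2 by simp
  have lr: "lam \<in> {1..min e (?d - 1)}" using lam1 lamd lame by auto
  have "RegIneq lam \<alpha> \<in> ineq_list e" unfolding ineq_list_def using reg lr by blast
  then have h: "holds p e (RegIneq lam \<alpha>) x" using x unfolding polyh_def by blast
  have mu: "mu e \<alpha> = \<mu>" unfolding mu_def using esum lamd by simp
  have pp: "real p > 0" using p by simp
  have pa: "real p ^ \<alpha> i = real p ^ \<mu> * ((if i \<in> T then real p else 1) / real p ^ \<beta> i)" for i
  proof -
    have "real p ^ \<alpha> i * real p ^ \<beta> i = real p ^ \<mu> * real p ^ \<epsilon> i"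
      using ab[of i] by (simp flip: power_add)
    moreover have "real p ^ \<epsilon> i = (if i \<in> T then real p else 1)" unfolding \<epsilon>_def by simp
    ultimately show ?thesis using pp by (simp add: field_simps)
  qed
  have "(\<Sum>i\<in>UNIV. real p ^ \<alpha> i * x $ i)
      = real p ^ \<mu> * (\<Sum>i\<in>UNIV. (if i \<in> T then real p else 1) * x $ i / real p ^ \<beta> i)"
    unfolding pa by (simp add: sum_distrib_left mult.assoc)
  moreover have "real lam * real p ^ (\<mu> + 1) + real (?d - lam) * real p ^ \<mu>
      = real p ^ \<mu> * (\<Sum>i\<in>UNIV. (if i \<in> T then real p else 1))"
    unfolding sum_if_card lam_def by (simp add: algebra_simps)
  ultimately have "real p ^ \<mu> * (\<Sum>i\<in>UNIV. (if i \<in> T then real p else 1))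
      \<le> real p ^ \<mu> * (\<Sum>i\<in>UNIV. (if i \<in> T then real p else 1) * x $ i / real p ^ \<beta> i)"
    using h mu by simp
  then show ?thesis using pp by (simp add: mult_le_cancel_left_pos)
qed


lemma I_gen:
  fixes \<beta> :: "'n::finite \<Rightarrow> nat" and x :: "real^'n"
  assumes p: "p \<ge> 2" and b: "\<beta> \<in> BB e" and x: "x \<in> polyh p e (ineq_list e)"
    and TS: "T \<subseteq> {i. \<beta> i \<ge> 1}" and Tne: "T \<noteq> {}" and d2: "CARD('n) \<ge> 2"
  shows "(\<Sum>i\<in>UNIV. (if i \<in> T then real p else 1) * x $ i / real p ^ \<beta> i)
           \<ge> (\<Sum>i\<in>UNIV. (if i \<in> T then real p else 1))"
proof (cases "T = UNIV")
  case False
  then show ?thesis using I_proper[OF p b x TS Tne] by blast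
next
  case True
  obtain k :: 'n where True by simp
  have k1: "{k} \<noteq> (UNIV::'n set)"
  proof
    assume "{k} = (UNIV::'n set)"
    then have "CARD('n) = 1" by (metis card.empty card_insert_disjoint empty_iff finite.emptyI One_nat_def)
    then show False using d2 by simp
  qed
  have k2: "- {k} \<noteq> ({}::'n set)" using k1 by auto
  have k3: "- {k} \<noteq> (UNIV::'n set)" by auto
  have A: "(\<Sum>i\<in>UNIV. (if i \<in> {k} then real p else 1) * x $ i / real p ^ \<beta> i)
           \<ge> (\<Sum>i\<in>UNIV. (if i \<in> {k} then real p else 1))"
    using I_proper[OF p b x _ _ k1] TS True by auto
  have B: "(\<Sum>i\<in>UNIV. (if i \<in> - {k} then real p else 1) * x $ i / real p ^ \<beta> i)
           \<ge> (\<Sum>i\<in>UNIV. (if i \<in> - {k} then real p else 1))"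
    using I_proper[OF p b x _ k2 k3] TS True by auto
  have e1: "(if i \<in> {k} then real p else 1) + (if i \<in> - {k} then real p else 1) = real p + 1" for i
    by auto
  have "(\<Sum>i\<in>UNIV. (real p + 1) * (x $ i / real p ^ \<beta> i))
      = (\<Sum>i\<in>UNIV. (if i \<in> {k} then real p else 1) * x $ i / real p ^ \<beta> i)
        + (\<Sum>i\<in>UNIV. (if i \<in> - {k} then real p else 1) * x $ i / real p ^ \<beta> i)"
    unfolding sum.distrib[symmetric]
    by (rule sum.cong) (auto simp: algebra_simps add_divide_distrib)
  also have "\<dots> \<ge> (\<Sum>i\<in>UNIV. (if i \<in> {k} then real p else 1)) + (\<Sum>i\<in>UNIV. (if i \<in> - {k} then real p else 1))"
    using A B by linarith
  also have "(\<Sum>i\<in>UNIV. (if i \<in> {k} then real p else 1)) + (\<Sum>i\<in>UNIV. (if i \<in> - {k} then real p else 1))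
      = (\<Sum>i\<in>(UNIV::'n set). (real p + 1) * 1)"
    unfolding sum.distrib[symmetric] using e1 by simp
  finally have "(real p + 1) * (\<Sum>i\<in>(UNIV::'n set). 1) \<le> (real p + 1) * (\<Sum>i\<in>UNIV. x $ i / real p ^ \<beta> i)"
    by (simp add: sum_distrib_left mult.commute)
  then have "(\<Sum>i\<in>(UNIV::'n set). (1::real)) \<le> (\<Sum>i\<in>UNIV. x $ i / real p ^ \<beta> i)"
    using p by (simp add: mult_le_cancel_left_pos)
  then have "real p * (\<Sum>i\<in>(UNIV::'n set). (1::real)) \<le> real p * (\<Sum>i\<in>UNIV. x $ i / real p ^ \<beta> i)"
    using p by (simp add: mult_le_cancel_left_pos)
  then show ?thesis using True by (simp add: sum_distrib_left mult.assoc mult.commute)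
qed


lemma claim_aux:
  fixes \<beta> :: "'n::finite \<Rightarrow> nat" and x :: "real^'n" and w :: "'n \<Rightarrow> real"
  assumes p: "p \<ge> 2" and b: "\<beta> \<in> BB e" and x: "x \<in> polyh p e (ineq_list e)" and d2: "CARD('n) \<ge> 2"
  shows "card {i. w i > 0} = n \<Longrightarrow> (\<forall>i. 0 \<le> w i \<and> w i \<le> \<Lambda>) \<Longrightarrow> (\<forall>i. w i > 0 \<longrightarrow> \<beta> i \<ge> 1)
    \<Longrightarrow> (\<exists>j. w j = \<Lambda>) \<Longrightarrow>
    (\<Sum>i\<in>UNIV. (\<Lambda> + (real p - 1) * w i) * x $ i / real p ^ \<beta> i) \<ge> (\<Sum>i\<in>UNIV. \<Lambda> + (real p - 1) * w i)"
proof (induction n arbitrary: w \<Lambda> rule: less_induct)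
  case (less n)
  show ?case
  proof (cases "\<Lambda> = 0")
    case True
    then have "\<forall>i. w i = 0" using less.prems(2) by (meson order_antisym)
    then show ?thesis using True by simp
  next
    case False
    obtain j where j: "w j = \<Lambda>" using less.prems(4) by blast
    have Lpos: "\<Lambda> > 0" using False less.prems(2) j by (metis order_le_less)
    define P where "P = {i. w i > 0}"
    have jP: "j \<in> P" using j Lpos P_def by simp
    define m where "m = Min (w ` P)"
    have mP: "m \<in> w ` P" unfolding m_def using jP by (intro Min_in) auto
    then obtain i0 where i0: "i0 \<in> P" "w i0 = m" by blast
    have mpos: "m > 0" using i0 P_def by simp
    have mle: "\<forall>i\<in>P. m \<le> w i" unfolding m_def by simp
    have mL: "m \<le> \<Lambda>" using mle jP j by auto
    define w' where "w' i = (if i \<in> P then w i - m else 0)" for i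
    define \<Lambda>' where "\<Lambda>' = \<Lambda> - m"
    have c: "card {i. w' i > 0} < n"
    proof -
      have "{i. w' i > 0} \<subseteq> P - {i0}" unfolding w'_def using i0 by auto
      then have "card {i. w' i > 0} \<le> card (P - {i0})" by (intro card_mono) auto
      moreover have "card (P - {i0}) < card P" using i0 by (intro card_Diff1_less) auto
      ultimately show ?thesis using less.prems(1) P_def by simp
    qed
    have h2: "\<forall>i. 0 \<le> w' i \<and> w' i \<le> \<Lambda>'"
      using mle less.prems(2) mL unfolding w'_def \<Lambda>'_def by auto
    have h3: "\<forall>i. w' i > 0 \<longrightarrow> \<beta> i \<ge> 1"
      using less.prems(3) unfolding w'_def P_def by auto
    have h4: "\<exists>j. w' j = \<Lambda>'" using j jP unfolding w'_def \<Lambda>'_def by auto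
    have IH: "(\<Sum>i\<in>UNIV. (\<Lambda>' + (real p - 1) * w' i) * x $ i / real p ^ \<beta> i)
       \<ge> (\<Sum>i\<in>UNIV. \<Lambda>' + (real p - 1) * w' i)"
      using less.IH[OF c refl h2 h3 h4] .
    have PS: "P \<subseteq> {i. \<beta> i \<ge> 1}" using less.prems(3) unfolding P_def by auto
    have I: "(\<Sum>i\<in>UNIV. (if i \<in> P then real p else 1) * x $ i / real p ^ \<beta> i)
           \<ge> (\<Sum>i\<in>UNIV. (if i \<in> P then real p else 1))"
      using I_gen[OF p b x PS _ d2] jP by blast
    have pw: "\<Lambda> + (real p - 1) * w i = m * (if i \<in> P then real p else 1) + (\<Lambda>' + (real p - 1) * w' i)" for i
    proof (cases "i \<in> P")
      case True
      then show ?thesis unfolding w'_def \<Lambda>'_def by (simp add: algebra_simps)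
    next
      case False
      then have "w i = 0" using less.prems(2) unfolding P_def by (meson not_less order_antisym mem_Collect_eq)
      then show ?thesis using False unfolding w'_def \<Lambda>'_def by simp
    qed
    have pw2: "(\<Lambda> + (real p - 1) * w i) * x $ i / real p ^ \<beta> i
       = m * ((if i \<in> P then real p else 1) * x $ i / real p ^ \<beta> i)
         + (\<Lambda>' + (real p - 1) * w' i) * x $ i / real p ^ \<beta> i" for i
      by (subst pw) (simp add: ring_distribs add_divide_distrib)
    have SL: "(\<Sum>i\<in>UNIV. (\<Lambda> + (real p - 1) * w i) * x $ i / real p ^ \<beta> i)
       = m * (\<Sum>i\<in>UNIV. (if i \<in> P then real p else 1) * x $ i / real p ^ \<beta> i)
         + (\<Sum>i\<in>UNIV. (\<Lambda>' + (real p - 1) * w' i) * x $ i / real p ^ \<beta> i)"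
      by (simp only: pw2 sum.distrib sum_distrib_left)
    have SR: "(\<Sum>i\<in>UNIV. \<Lambda> + (real p - 1) * w i)
       = m * (\<Sum>i\<in>UNIV. (if i \<in> P then real p else 1)) + (\<Sum>i\<in>UNIV. \<Lambda>' + (real p - 1) * w' i)"
      by (simp only: pw sum.distrib sum_distrib_left)
    have "m * (\<Sum>i\<in>UNIV. (if i \<in> P then real p else 1))
        \<le> m * (\<Sum>i\<in>UNIV. (if i \<in> P then real p else 1) * x $ i / real p ^ \<beta> i)"
      using I mpos by (intro mult_left_mono) auto
    then show ?thesis unfolding SL SR using IH by linarith
  qed
qed


lemma polyh_facts:
  assumes "x \<in> polyh p e (ineq_list e :: ('n::finite) ineq set)"
  shows "(\<Sum>i\<in>UNIV. x $ i) \<le> real CARD('n) - 1 + real p ^ e" and "\<And>i. x $ i \<ge> 1"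
proof -
  have "SumIneq \<in> (ineq_list e :: 'n ineq set)" unfolding ineq_list_def by simp
  then have "holds p e SumIneq x" using assms unfolding polyh_def by blast
  moreover have "CARD('n) \<ge> 1" by (simp add: Suc_leI)
  ultimately show "(\<Sum>i\<in>UNIV. x $ i) \<le> real CARD('n) - 1 + real p ^ e" by (simp add: of_nat_diff)
  fix i
  have "LowIneq i \<in> (ineq_list e :: 'n ineq set)" unfolding ineq_list_def by simp
  then have "holds p e (LowIneq i) x" using assms unfolding polyh_def by blast
  then show "x $ i \<ge> 1" by simp
qed

lemma keyB_neg:
  fixes x :: "real^'n::finite" and c :: "'n \<Rightarrow> real"
  assumes p: "p \<ge> 2" and x: "x \<in> polyh p e (ineq_list e)" and neg: "\<exists>k. c k \<le> 0"
  shows "\<exists>\<beta>\<in>BB e. (\<Sum>i\<in>UNIV. c i * real p ^ \<beta> i) \<le> (\<Sum>i\<in>UNIV. c i * x $ i)"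
proof -
  note hs = polyh_facts(1)[OF x] and hl = polyh_facts(2)[OF x]
  have "Min (range c) \<in> range c" by (rule Min_in) auto
  then obtain k where k: "c k = Min (range c)" by (metis rangeE)
  have kmin: "\<And>i. c k \<le> c i" unfolding k by simp
  have kneg: "c k \<le> 0" using neg kmin by (meson order_trans)
  define \<beta> where "\<beta> i = (if i = k then e else 0)" for i
  have bB: "\<beta> \<in> BB e" unfolding BB_def \<beta>_def by simp
  have pw: "c i * real p ^ \<beta> i = c i + (if i = k then c k * (real p ^ e - 1) else 0)" for i
    unfolding \<beta>_def by (auto simp: algebra_simps)
  have L: "(\<Sum>i\<in>UNIV. c i * real p ^ \<beta> i) = (\<Sum>i\<in>UNIV. c i) + c k * (real p ^ e - 1)"
    by (simp only: pw sum.distrib) simp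
  have "(\<Sum>i\<in>UNIV. c i * x $ i) = (\<Sum>i\<in>UNIV. c i) + (\<Sum>i\<in>UNIV. c i * (x $ i - 1))"
    by (simp add: sum.distrib[symmetric] algebra_simps)
  moreover have "(\<Sum>i\<in>UNIV. c i * (x $ i - 1)) \<ge> (\<Sum>i\<in>UNIV. c k * (x $ i - 1))"
    using hl kmin by (intro sum_mono mult_right_mono) auto
  moreover have "(\<Sum>i\<in>UNIV. c k * (x $ i - 1)) = c k * ((\<Sum>i\<in>UNIV. x $ i) - real CARD('n))"
    by (simp add: sum_distrib_left[symmetric] sum_subtractf)
  moreover have "c k * ((\<Sum>i\<in>UNIV. x $ i) - real CARD('n)) \<ge> c k * (real p ^ e - 1)"
    using hs kneg by (intro mult_left_mono_neg) auto
  ultimately have "(\<Sum>i\<in>UNIV. c i * x $ i) \<ge> (\<Sum>i\<in>UNIV. c i * real p ^ \<beta> i)"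
    unfolding L by linarith
  then show ?thesis using bB by blast
qed


lemma exchange:
  fixes \<beta> :: "'n::finite \<Rightarrow> nat" and c :: "'n \<Rightarrow> real"
  assumes p: "p \<ge> 2" and b: "\<beta> \<in> BB e" and pos: "\<forall>i. c i > 0"
    and opt: "\<forall>\<beta>'\<in>BB e. (\<Sum>i\<in>UNIV. c i * real p ^ \<beta> i) \<le> (\<Sum>i\<in>UNIV. c i * real p ^ \<beta>' i)"
    and j: "\<beta> j \<ge> 1"
  shows "c j * real p ^ \<beta> j \<le> real p * (c i * real p ^ \<beta> i)"
proof (cases "i = j")
  case True
  have a: "c j * real p ^ \<beta> j \<ge> 0" using pos[rule_format, of j] by simp
  have "1 * (c j * real p ^ \<beta> j) \<le> real p * (c j * real p ^ \<beta> j)"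
    using p a by (intro mult_right_mono) auto
  then show ?thesis using True by simp
next
  case False
  define \<beta>' where "\<beta>' = \<beta>(j := \<beta> j - 1, i := \<beta> i + 1)"
  have pw: "\<beta>' l + (if l = j then 1 else 0) = \<beta> l + (if l = i then 1 else 0)" for l
    using False j unfolding \<beta>'_def by auto
  have "(\<Sum>l\<in>UNIV. \<beta>' l + (if l = j then 1 else 0)) = (\<Sum>l\<in>UNIV. \<beta> l + (if l = i then 1 else 0))"
    using pw by simp
  then have "(\<Sum>l\<in>UNIV. \<beta>' l) = (\<Sum>l\<in>UNIV. \<beta> l)" by (simp add: sum.distrib)
  then have b': "\<beta>' \<in> BB e" using b unfolding BB_def by simp
  define q where "q = real p ^ (\<beta> j - 1)"
  have pj: "real p ^ \<beta> j = real p * q" unfolding q_def using j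
    by (metis One_nat_def Suc_pred le_simps(3) power_Suc zero_less_one less_le_trans)
  have pw2: "c l * real p ^ \<beta>' l = c l * real p ^ \<beta> l
     + (if l = i then c i * real p ^ \<beta> i * (real p - 1) else 0)
     - (if l = j then c j * q * (real p - 1) else 0)" for l
    using False pj unfolding \<beta>'_def q_def[symmetric] by (auto simp: algebra_simps q_def)
  have "(\<Sum>l\<in>UNIV. c l * real p ^ \<beta>' l) = (\<Sum>l\<in>UNIV. c l * real p ^ \<beta> l)
     + c i * real p ^ \<beta> i * (real p - 1) - c j * q * (real p - 1)"
    by (simp only: pw2 sum.distrib sum_subtractf) simp
  then have "c j * q * (real p - 1) \<le> c i * real p ^ \<beta> i * (real p - 1)"
    using opt b' by fastforce
  then have "c j * q \<le> c i * real p ^ \<beta> i" using p by (simp add: mult_le_cancel_right)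
  then have "real p * (c j * q) \<le> real p * (c i * real p ^ \<beta> i)" using p by (intro mult_left_mono) auto
  then show ?thesis using pj by (simp add: algebra_simps)
qed


lemma keyB_pos:
  fixes x :: "real^'n::finite" and c :: "'n \<Rightarrow> real"
  assumes p: "p \<ge> 2" and e1: "e \<ge> 1" and x: "x \<in> polyh p e (ineq_list e)" and d2: "CARD('n) \<ge> 2"
    and pos: "\<forall>i. c i > 0"
  shows "\<exists>\<beta>\<in>BB e. (\<Sum>i\<in>UNIV. c i * real p ^ \<beta> i) \<le> (\<Sum>i\<in>UNIV. c i * x $ i)"
proof -
  note hl = polyh_facts(2)[OF x]
  define f where "f \<beta> = (\<Sum>i\<in>UNIV. c i * real p ^ \<beta> i)" for \<beta> :: "'n \<Rightarrow> nat"
  obtain k :: 'n where True by simp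
  have ne: "(\<lambda>i. if i = k then e else 0) \<in> BB e" unfolding BB_def by simp
  have "Min (f ` BB e) \<in> f ` BB e" using finite_BB ne by (intro Min_in) auto
  then obtain \<beta> where b: "\<beta> \<in> BB e" and fb: "f \<beta> = Min (f ` BB e)" by auto
  have opt: "\<forall>\<beta>'\<in>BB e. f \<beta> \<le> f \<beta>'"
  proof
    fix \<beta>' :: "'n \<Rightarrow> nat" assume "\<beta>' \<in> BB e"
    moreover have "finite (f ` BB e)" by (intro finite_imageI finite_BB)
    ultimately show "f \<beta> \<le> f \<beta>'" unfolding fb by (intro Min_le) auto
  qed
  have ex: "\<And>i j. \<beta> j \<ge> 1 \<Longrightarrow> c j * real p ^ \<beta> j \<le> real p * (c i * real p ^ \<beta> i)"
    using exchange[OF p b pos] opt unfolding f_def by blast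
  define u where "u i = c i * real p ^ \<beta> i" for i
  have upos: "u i > 0" for i unfolding u_def using pos p by simp
  define S where "S = {i. \<beta> i \<ge> 1}"
  have Sne: "S \<noteq> {}"
  proof
    assume "S = {}"
    then have "\<forall>i. \<beta> i = 0" unfolding S_def by (auto simp: not_less_eq_eq)
    then show False using b e1 unfolding BB_def by simp
  qed
  have "Max (u ` S) \<in> u ` S" using Sne by (intro Max_in) auto
  then obtain j0 where j0: "j0 \<in> S" "u j0 = Max (u ` S)" by auto
  define \<Lambda> where "\<Lambda> = u j0 / real p"
  have pp: "real p > 1" using p by simp
  have uj: "u j \<le> real p * \<Lambda>" if "j \<in> S" for j
    unfolding \<Lambda>_def using that j0 pp by simp
  have Lu: "\<Lambda> \<le> u i" for i
  proof -
    have "u j0 \<le> real p * u i" using ex[of j0 i] j0 unfolding u_def S_def by simp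
    then show ?thesis unfolding \<Lambda>_def using pp by (simp add: divide_le_eq mult.commute)
  qed
  have Lpos: "\<Lambda> > 0" unfolding \<Lambda>_def using upos pp by simp
  define w where "w i = (if \<beta> i \<ge> 1 then (u i - \<Lambda>) / (real p - 1) else 0)" for i
  have h2: "\<forall>i. 0 \<le> w i \<and> w i \<le> \<Lambda>"
  proof
    fix i
    show "0 \<le> w i \<and> w i \<le> \<Lambda>"
    proof (cases "\<beta> i \<ge> 1")
      case True
      have "u i - \<Lambda> \<le> (real p - 1) * \<Lambda>" using uj[of i] True unfolding S_def by (simp add: algebra_simps)
      then show ?thesis using True Lu[of i] pp Lpos unfolding w_def by (simp add: divide_le_eq mult.commute)
    next
      case False
      then show ?thesis using Lpos unfolding w_def by simp
    qed
  qed
  have h3: "\<forall>i. w i > 0 \<longrightarrow> \<beta> i \<ge> 1" unfolding w_def by auto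
  have h4: "\<exists>j. w j = \<Lambda>"
  proof
    have "u j0 = real p * \<Lambda>" unfolding \<Lambda>_def using pp by simp
    then have "u j0 - \<Lambda> = (real p - 1) * \<Lambda>" by (simp add: algebra_simps)
    then show "w j0 = \<Lambda>" using j0 pp unfolding w_def S_def by simp
  qed
  have C: "(\<Sum>i\<in>UNIV. (\<Lambda> + (real p - 1) * w i) * x $ i / real p ^ \<beta> i) \<ge> (\<Sum>i\<in>UNIV. \<Lambda> + (real p - 1) * w i)"
    using claim_aux[OF p b x d2 refl h2 h3 h4] .
  define t where "t i = (if \<beta> i \<ge> 1 then 0 else u i - \<Lambda>)" for i
  have p1: "c i * x $ i = (\<Lambda> + (real p - 1) * w i) * x $ i / real p ^ \<beta> i + t i * x $ i" for i
  proof (cases "\<beta> i \<ge> 1")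
    case True
    have "\<Lambda> + (real p - 1) * w i = u i" unfolding w_def using True pp by simp
    then show ?thesis unfolding t_def u_def using True pp by simp
  next
    case False
    then have b0: "\<beta> i = 0" by simp
    show ?thesis unfolding t_def w_def u_def b0 by (simp add: algebra_simps)
  qed
  have p2: "c i * real p ^ \<beta> i = (\<Lambda> + (real p - 1) * w i) + t i" for i
  proof (cases "\<beta> i \<ge> 1")
    case True
    have "\<Lambda> + (real p - 1) * w i = u i" unfolding w_def using True pp by simp
    then show ?thesis unfolding t_def u_def using True by simp
  next
    case False
    then show ?thesis unfolding t_def w_def u_def by simp
  qed
  have p3: "t i * x $ i \<ge> t i" for i
  proof -
    have "t i \<ge> 0" unfolding t_def using Lu[of i] by simp
    then show ?thesis using hl[of i] mult_left_mono[of 1 "x $ i" "t i"] by simp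
  qed
  have "(\<Sum>i\<in>UNIV. c i * x $ i) = (\<Sum>i\<in>UNIV. (\<Lambda> + (real p - 1) * w i) * x $ i / real p ^ \<beta> i) + (\<Sum>i\<in>UNIV. t i * x $ i)"
    by (simp only: p1 sum.distrib)
  moreover have "(\<Sum>i\<in>UNIV. c i * real p ^ \<beta> i) = (\<Sum>i\<in>UNIV. \<Lambda> + (real p - 1) * w i) + (\<Sum>i\<in>UNIV. t i)"
    by (simp only: p2 sum.distrib)
  moreover have "(\<Sum>i\<in>UNIV. t i * x $ i) \<ge> (\<Sum>i\<in>UNIV. t i)" using p3 by (intro sum_mono) auto
  ultimately have "(\<Sum>i\<in>UNIV. c i * real p ^ \<beta> i) \<le> (\<Sum>i\<in>UNIV. c i * x $ i)" using C by linarith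
  then show ?thesis using b by blast
qed

lemma partB:
  fixes p e :: nat
  assumes p: "p \<ge> 2" and e1: "e \<ge> 1" and d2: "CARD('n::finite) \<ge> 2"
  shows "polyh p e (ineq_list e) \<subseteq> convex hull (pv p ` BB e :: (real^'n) set)"
proof
  fix x :: "real^'n" assume x: "x \<in> polyh p e (ineq_list e)"
  let ?H = "convex hull (pv p ` BB e :: (real^'n) set)"
  show "x \<in> ?H"
  proof (rule ccontr)
    assume nx: "x \<notin> ?H"
    have cl: "closed ?H"
      by (intro compact_imp_closed finite_imp_compact_convex_hull finite_imageI finite_BB)
    obtain a b where ab: "inner a x < b" "\<forall>y\<in>?H. inner a y > b"
      using separating_hyperplane_closed_point[OF convex_convex_hull cl nx] by blast
    obtain \<beta> where b: "\<beta> \<in> BB e" and le: "(\<Sum>i\<in>UNIV. a $ i * real p ^ \<beta> i) \<le> (\<Sum>i\<in>UNIV. a $ i * x $ i)"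
    proof (cases "\<exists>k. a $ k \<le> 0")
      case True
      then show ?thesis using keyB_neg[OF p x, of "\<lambda>i. a $ i"] that by blast
    next
      case False
      then have "\<forall>i. a $ i > 0" by (simp add: not_le)
      then show ?thesis using keyB_pos[OF p e1 x d2, of "\<lambda>i. a $ i"] that by blast
    qed
    have "pv p \<beta> \<in> ?H" using b by (intro hull_inc) auto
    then have "inner a (pv p \<beta>) > b" using ab by blast
    moreover have "inner a (pv p \<beta>) = (\<Sum>i\<in>UNIV. a $ i * real p ^ \<beta> i)" by (simp add: inner_vec_def)
    moreover have "inner a x = (\<Sum>i\<in>UNIV. a $ i * x $ i)" by (simp add: inner_vec_def)
    ultimately show False using le ab(1) by linarith
  qed
qed


lemma LI_real:
  fixes \<alpha> \<beta> :: "'n::finite \<Rightarrow> nat"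
  shows "(\<Sum>i\<in>UNIV. real p ^ \<alpha> i * pv p \<beta> $ i) = real_of_int (LI p \<alpha> \<beta>)"
  by (simp add: LI_def power_add)

lemma RI_real:
  fixes \<alpha> :: "'n::finite \<Rightarrow> nat"
  shows "real lam * real p ^ (mu e \<alpha> + 1) + real (CARD('n) - lam) * real p ^ (mu e \<alpha>)
      = real_of_int (RI p e lam \<alpha>)" by (simp add: RI_def)

lemma lin_comb:
  fixes v :: "'t \<Rightarrow> real^'n::finite"
  shows "(\<Sum>i\<in>UNIV. a i * (\<Sum>t\<in>A. u t *\<^sub>R v t) $ i) = (\<Sum>t\<in>A. u t * (\<Sum>i\<in>UNIV. a i * v t $ i))"
  by (simp add: sum_component sum_distrib_left sum.swap[of _ A] mult.left_commute)

lemma avg_bound: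
  fixes f :: "'t \<Rightarrow> real"
  assumes "finite A" "\<forall>t\<in>A. f t \<ge> R" "t0 \<in> A" "f t0 \<ge> R + 1"
  shows "(\<Sum>t\<in>A. (1 / real (card A)) * f t) \<ge> R + 1 / real (card A)"
proof -
  have cpos: "real (card A) > 0" using assms(1,3) card_gt_0_iff by fastforce
  have "(\<Sum>t\<in>A. f t) = f t0 + (\<Sum>t\<in>A - {t0}. f t)" using assms(1,3) by (simp add: sum.remove)
  moreover have "(\<Sum>t\<in>A - {t0}. f t) \<ge> (\<Sum>t\<in>A - {t0}. R)" using assms(2) by (intro sum_mono) auto
  moreover have "(\<Sum>t\<in>A - {t0}. R) = (real (card A) - 1) * R"
  proof -
    have "card A > 0" using assms(1,3) card_gt_0_iff by blast
    then have "card A \<ge> 1" by simp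
    then show ?thesis using assms(1,3) by (simp add: of_nat_diff)
  qed
  ultimately have "(\<Sum>t\<in>A. f t) \<ge> real (card A) * R + 1" using assms(4) by (simp add: algebra_simps)
  then have "(1 / real (card A)) * (\<Sum>t\<in>A. f t) \<ge> (1 / real (card A)) * (real (card A) * R + 1)"
    using cpos by (intro mult_left_mono) auto
  moreover have "(\<Sum>t\<in>A. (1 / real (card A)) * f t) = (1 / real (card A)) * (\<Sum>t\<in>A. f t)"
    by (simp add: sum_distrib_left)
  moreover have "(1 / real (card A)) * (real (card A) * R + 1) = R + 1 / real (card A)"
    using cpos by (simp add: field_simps)
  ultimately show ?thesis by linarith
qed

definition conc :: "nat \<Rightarrow> 'n \<Rightarrow> ('n \<Rightarrow> nat)" where
  "conc e k = (\<lambda>i. if i = k then e else 0)"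

lemma conc_BB: "conc e k \<in> BB e"
  unfolding BB_def conc_def by simp

lemma reg_rhs_bound:
  fixes \<alpha> :: "'n::finite \<Rightarrow> nat"
  assumes p: "p \<ge> 2" and a: "\<alpha> \<in> regular_vectors lam e" and lam: "lam \<in> {1..min e (CARD('n) - 1)}"
  shows "real_of_int (RI p e lam \<alpha>) \<le> real CARD('n) * real p ^ (2 * e)"
proof -
  obtain k :: 'n where True by simp
  have "real_of_int (RI p e lam \<alpha>) \<le> real_of_int (LI p \<alpha> (conc e k))"
    using reg_vertex(1)[OF p a lam conc_BB] by simp
  also have "\<dots> = (\<Sum>i\<in>UNIV. real p ^ \<alpha> i * real p ^ conc e k i)"
    using LI_real[of p \<alpha> "conc e k"] by simp
  also have "\<dots> \<le> (\<Sum>i\<in>(UNIV::'n set). real p ^ e * real p ^ e)"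
  proof (intro sum_mono mult_mono)
    fix i
    show "real p ^ \<alpha> i \<le> real p ^ e" using reg_max_lt[OF a, of i] p by (intro power_increasing) auto
    show "real p ^ conc e k i \<le> real p ^ e" using p unfolding conc_def by (intro power_increasing) auto
  qed auto
  also have "\<dots> = real CARD('n) * real p ^ (2 * e)" by (simp add: power_add[symmetric] mult_2)
  finally show ?thesis .
qed

lemma W_Sum:
  fixes p e :: nat
  assumes p: "p \<ge> 2" and d2: "CARD('n::finite) \<ge> 2" and e1: "e \<ge> 1"
  shows "(\<chi> i. real p ^ e) \<in> polyh p e ((ineq_list e :: 'n ineq set) - {SumIneq})
       \<and> (\<chi> i. real p ^ e) \<notin> polyh p e (ineq_list e :: 'n ineq set)"
proof
  let ?y = "(\<chi> i. real p ^ e) :: real^'n"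
  show "?y \<in> polyh p e ((ineq_list e :: 'n ineq set) - {SumIneq})"
    unfolding polyh_def
  proof (intro CollectI ballI)
    fix j assume j: "j \<in> (ineq_list e :: 'n ineq set) - {SumIneq}"
    then consider i where "j = LowIneq i"
      | lam \<alpha> where "j = RegIneq lam \<alpha>" "lam \<in> {1..min e (CARD('n) - 1)}" "\<alpha> \<in> regular_vectors lam e"
      unfolding ineq_list_def by auto
    then show "holds p e j ?y"
    proof cases
      case 1
      then show ?thesis using p by simp
    next
      case 2
      obtain k :: 'n where True by simp
      have "holds p e j (pv p (conc e k))" using vertex_in_polyh[OF p conc_BB] j by blast
      moreover have "(\<Sum>i\<in>UNIV. real p ^ \<alpha> i * pv p (conc e k) $ i) \<le> (\<Sum>i\<in>UNIV. real p ^ \<alpha> i * ?y $ i)"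
        using p by (intro sum_mono mult_left_mono) (auto simp: conc_def intro: power_increasing)
      ultimately show ?thesis using 2 by simp
    qed
  qed
  have "SumIneq \<in> (ineq_list e :: 'n ineq set)" unfolding ineq_list_def by simp
  moreover have "\<not> holds p e SumIneq ?y"
  proof -
    have "real p ^ e \<ge> real p" using power_increasing[of 1 e "real p"] p e1 by simp
    moreover have "real p \<ge> 2" using p by simp
    ultimately have P: "real p ^ e \<ge> 2" by linarith
    have "(real CARD('n) - 1) * (real p ^ e - 1) > 0" using d2 P by (intro mult_pos_pos) auto
    then have "real CARD('n) * real p ^ e > real CARD('n) - 1 + real p ^ e" by (simp add: algebra_simps)
    moreover have "CARD('n) \<ge> 1" using d2 by simp
    ultimately show ?thesis by (simp add: of_nat_diff)
  qed
  ultimately show "?y \<notin> polyh p e (ineq_list e :: 'n ineq set)" unfolding polyh_def by blast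
qed


lemma sum_if_card_int:
  fixes T :: "'n::finite set" and a b :: int
  shows "(\<Sum>i\<in>UNIV. if i \<in> T then a else b) = int (card T) * a + int (CARD('n) - card T) * b"
proof -
  have "(\<Sum>i\<in>UNIV. if i \<in> T then a else b) = (\<Sum>i\<in>T. a) + (\<Sum>i\<in>- T. b)"
    by (simp add: sum.If_cases)
  also have "\<dots> = int (card T) * a + int (card (- T)) * b" by simp
  also have "card (- T) = CARD('n) - card T"
    by (metis Compl_eq_Diff_UNIV card_Diff_subset finite subset_UNIV)
  finally show ?thesis .
qed

definition bt :: "nat \<Rightarrow> ('n::finite \<Rightarrow> nat) \<Rightarrow> 'n set \<Rightarrow> ('n \<Rightarrow> nat)" where
  "bt e \<alpha> T = (\<lambda>i. (mu e \<alpha> - \<alpha> i) + (if i \<in> T then 1 else 0))"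

lemma bt_BB:
  fixes \<alpha> :: "'n::finite \<Rightarrow> nat"
  assumes a: "\<alpha> \<in> regular_vectors lam e" and lam: "lam \<in> {1..min e (CARD('n) - 1)}" and T: "card T = lam"
  shows "bt e \<alpha> T \<in> BB e"
proof -
  let ?m = "mu e \<alpha>"
  have le: "\<alpha> i \<le> ?m" for i using reg_basic(2)[OF a lam] .
  have s1: "(\<Sum>i\<in>UNIV. ?m - \<alpha> i) + (\<Sum>i\<in>UNIV. \<alpha> i) = ?m * CARD('n)"
    using le by (simp add: sum.distrib[symmetric])
  have s2: "(\<Sum>i\<in>(UNIV::'n set). if i \<in> T then 1 else 0) = lam" using T by (simp add: sum.If_cases)
  have "(\<Sum>i\<in>UNIV. bt e \<alpha> T i) = (\<Sum>i\<in>UNIV. ?m - \<alpha> i) + lam"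
    unfolding bt_def using s2 by (simp add: sum.distrib)
  also have "\<dots> = e" using s1 reg_basic(1)[OF a lam] by linarith
  finally show ?thesis unfolding BB_def by simp
qed

lemma bt_tight:
  fixes \<alpha> :: "'n::finite \<Rightarrow> nat"
  assumes a: "\<alpha> \<in> regular_vectors lam e" and lam: "lam \<in> {1..min e (CARD('n) - 1)}" and T: "card T = lam"
  shows "LI p \<alpha> (bt e \<alpha> T) = RI p e lam \<alpha>"
proof -
  let ?m = "mu e \<alpha>"
  have le: "\<alpha> i \<le> ?m" for i using reg_basic(2)[OF a lam] .
  have "\<alpha> i + bt e \<alpha> T i = ?m + (if i \<in> T then 1 else 0)" for i unfolding bt_def using le[of i] by simp
  then have "LI p \<alpha> (bt e \<alpha> T) = (\<Sum>i\<in>UNIV. if i \<in> T then int p ^ (?m + 1) else int p ^ ?m)"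
    unfolding LI_def by (intro sum.cong) auto
  also have "\<dots> = RI p e lam \<alpha>" unfolding sum_if_card_int RI_def T by simp
  finally show ?thesis .
qed


lemma reg_tight_unique:
  fixes \<alpha> \<alpha>' :: "'n::finite \<Rightarrow> nat"
  assumes p: "p \<ge> 2" and a: "\<alpha> \<in> regular_vectors lam e" and lam: "lam \<in> {1..min e (CARD('n) - 1)}"
    and a': "\<alpha>' \<in> regular_vectors lam' e" and lam': "lam' \<in> {1..min e (CARD('n) - 1)}"
    and tight: "\<forall>T. card T = lam \<longrightarrow> LI p \<alpha>' (bt e \<alpha> T) = RI p e lam' \<alpha>'"
  shows "lam' = lam \<and> \<alpha>' = \<alpha>"
proof -
  let ?m = "mu e \<alpha>" and ?m' = "mu e \<alpha>'"
  have le: "\<alpha> i \<le> ?m" for i using reg_basic(2)[OF a lam] .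
  have tt: "\<alpha>' i + bt e \<alpha> T i = ?m' \<or> \<alpha>' i + bt e \<alpha> T i = ?m' + 1" if "card T = lam" for T i
    using reg_vertex(2)[OF p a' lam' bt_BB[OF a lam that]] tight that by auto
  have h: "\<alpha>' i + (?m - \<alpha> i) = ?m'" for i
  proof -
    have ci: "card (UNIV - {i}) = CARD('n) - 1" by simp
    have "lam \<le> card (UNIV - {i})" using lam ci by auto
    then obtain T0 where T0: "T0 \<subseteq> UNIV - {i}" "card T0 = lam" "finite T0" by (rule obtain_subset_with_card_n)
    have "lam - 1 \<le> card (UNIV - {i})" using lam ci by auto
    then obtain S where S: "S \<subseteq> UNIV - {i}" "card S = lam - 1" "finite S" by (rule obtain_subset_with_card_n)
    have T1: "card (insert i S) = lam" using S lam by (subst card_insert_disjoint) auto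
    have "\<alpha>' i + bt e \<alpha> T0 i = ?m' \<or> \<alpha>' i + bt e \<alpha> T0 i = ?m' + 1" using tt T0(2) .
    moreover have "bt e \<alpha> T0 i = ?m - \<alpha> i" using T0(1) unfolding bt_def by auto
    moreover have "\<alpha>' i + bt e \<alpha> (insert i S) i = ?m' \<or> \<alpha>' i + bt e \<alpha> (insert i S) i = ?m' + 1"
      using tt T1 .
    moreover have "bt e \<alpha> (insert i S) i = ?m - \<alpha> i + 1" unfolding bt_def by simp
    ultimately show ?thesis by auto
  qed
  have m0: "Min (range \<alpha>) = 0" using a unfolding regular_vectors_def by simp
  have "Min (range \<alpha>) \<in> range \<alpha>" by (rule Min_in) auto
  then obtain i0 where "Min (range \<alpha>) = \<alpha> i0" by blast
  then have i0: "\<alpha> i0 = 0" using m0 by simp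
  have m1: "Min (range \<alpha>') = 0" using a' unfolding regular_vectors_def by simp
  have "Min (range \<alpha>') \<in> range \<alpha>'" by (rule Min_in) auto
  then obtain i1 where "Min (range \<alpha>') = \<alpha>' i1" by blast
  then have i1: "\<alpha>' i1 = 0" using m1 by simp
  have "?m \<le> ?m'" using h[of i0] i0 by simp
  moreover have "?m' \<le> ?m" using h[of i1] i1 le[of i1] by simp
  ultimately have mm: "?m = ?m'" by simp
  have aa: "\<alpha>' = \<alpha>"
  proof
    fix i show "\<alpha>' i = \<alpha> i" using h[of i] le[of i] mm by simp
  qed
  have "e + (\<Sum>i\<in>UNIV. \<alpha> i) = ?m * CARD('n) + lam" using reg_basic(1)[OF a lam] .
  moreover have "e + (\<Sum>i\<in>UNIV. \<alpha>' i) = ?m' * CARD('n) + lam'" using reg_basic(1)[OF a' lam'] .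
  ultimately have "lam' = lam" using aa by simp
  then show ?thesis using aa by simp
qed


definition onev :: "real^'n::finite" where "onev = (\<chi> i. 1)"

lemma lin_y:
  fixes z :: "real^'n::finite"
  shows "(\<Sum>i\<in>UNIV. a i * ((1 - \<delta>) *\<^sub>R z + \<delta> *\<^sub>R onev) $ i)
       = (1 - \<delta>) * (\<Sum>i\<in>UNIV. a i * z $ i) + \<delta> * (\<Sum>i\<in>UNIV. a i)"
proof -
  have "a i * ((1 - \<delta>) *\<^sub>R z + \<delta> *\<^sub>R onev) $ i = (1 - \<delta>) * (a i * z $ i) + \<delta> * a i" for i
    by (simp add: onev_def algebra_simps)
  then show ?thesis by (simp add: sum.distrib sum_distrib_left)
qed

lemma W_Reg:
  fixes \<alpha> :: "'n::finite \<Rightarrow> nat"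
  assumes p: "p \<ge> 2" and d2: "CARD('n) \<ge> 2"
    and a: "\<alpha> \<in> regular_vectors lam e" and lam: "lam \<in> {1..min e (CARD('n) - 1)}"
  shows "\<exists>y. y \<in> polyh p e (ineq_list e - {RegIneq lam \<alpha>}) \<and> y \<notin> polyh p e (ineq_list e)"
proof -
  let ?d = "CARD('n)"
  let ?m = "mu e \<alpha>"
  define E where "E = {T :: 'n set. card T = lam}"
  have finE: "finite E" unfolding E_def by simp
  have "lam \<le> card (UNIV :: 'n set)" using lam by auto
  then obtain T00 :: "'n set" where "T00 \<subseteq> UNIV" "card T00 = lam" "finite T00" by (rule obtain_subset_with_card_n)
  then have neE: "T00 \<in> E" unfolding E_def by simp
  define N where "N = real (card E)"
  have Npos: "N > 0" unfolding N_def using finE neE card_gt_0_iff by fastforce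
  have "card E > 0" using finE neE card_gt_0_iff by blast
  then have N1: "N \<ge> 1" unfolding N_def using neE by auto
  define z where "z = (\<Sum>T\<in>E. (1 / N) *\<^sub>R pv p (bt e \<alpha> T))"
  let ?H = "convex hull (pv p ` BB e :: (real^'n) set)"
  have zH: "z \<in> ?H" unfolding z_def
  proof (rule convex_sum[OF finE convex_convex_hull])
    show "(\<Sum>T\<in>E. 1 / N) = 1" using Npos neE unfolding N_def by auto
    show "\<And>T. T \<in> E \<Longrightarrow> 0 \<le> 1 / N" using Npos by simp
    show "\<And>T. T \<in> E \<Longrightarrow> pv p (bt e \<alpha> T) \<in> ?H"
      using bt_BB[OF a lam] unfolding E_def by (intro hull_inc) auto
  qed
  have zP: "z \<in> polyh p e (ineq_list e)" using partA[OF p] zH by blast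
  define Bd where "Bd = real ?d * real p ^ (2 * e)"
  have Bd0: "Bd \<ge> 0" unfolding Bd_def by simp
  define \<delta> where "\<delta> = 1 / (N * (Bd + 1))"
  have dpos: "\<delta> > 0" unfolding \<delta>_def using Npos Bd0 by simp
  have d1: "\<delta> \<le> 1" unfolding \<delta>_def using N1 Bd0
    by (simp add: divide_le_eq) (smt (verit) mult_le_cancel_left1 mult_nonneg_nonneg)
  have "Bd * N \<ge> 0" using Bd0 Npos by simp
  then have nz: "N + Bd * N \<noteq> 0" using Npos by linarith
  have dB: "\<delta> * (Bd + 1) = 1 / N" unfolding \<delta>_def using Npos nz by (simp add: field_simps)
  define y where "y = (1 - \<delta>) *\<^sub>R z + \<delta> *\<^sub>R onev"
  have yc: "y $ i = (1 - \<delta>) * z $ i + \<delta>" for i unfolding y_def onev_def by simp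
  have Lz: "(\<Sum>i\<in>UNIV. real p ^ \<gamma> i * z $ i) = (\<Sum>T\<in>E. (1 / N) * real_of_int (LI p \<gamma> (bt e \<alpha> T)))" for \<gamma>
    unfolding z_def lin_comb LI_real ..
  have Ly: "(\<Sum>i\<in>UNIV. real p ^ \<gamma> i * y $ i)
      = (1 - \<delta>) * (\<Sum>i\<in>UNIV. real p ^ \<gamma> i * z $ i) + \<delta> * (\<Sum>i\<in>UNIV. real p ^ \<gamma> i)" for \<gamma>
    unfolding y_def by (rule lin_y)
  have yin: "y \<in> polyh p e (ineq_list e - {RegIneq lam \<alpha>})"
    unfolding polyh_def
  proof (intro CollectI ballI)
    fix j assume j: "j \<in> ineq_list e - {RegIneq lam \<alpha>}"
    then have jL: "j \<in> ineq_list e" by simp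
    have hz: "holds p e j z" using zP jL unfolding polyh_def by blast
    consider "j = SumIneq" | i where "j = LowIneq i"
      | lam' \<alpha>' where "j = RegIneq lam' \<alpha>'" "lam' \<in> {1..min e (?d - 1)}" "\<alpha>' \<in> regular_vectors lam' e"
      using jL unfolding ineq_list_def by auto
    then show "holds p e j y"
    proof cases
      case 1
      let ?K = "real (?d - 1) + real p ^ e"
      have sz: "(\<Sum>i\<in>UNIV. z $ i) \<le> ?K" using hz 1 by simp
      have "real ?d \<le> ?K" using p d2 by (simp add: of_nat_diff)
      have "(\<Sum>i\<in>UNIV. y $ i) = (1 - \<delta>) * (\<Sum>i\<in>UNIV. z $ i) + \<delta> * real ?d"
        unfolding yc by (simp add: sum.distrib sum_distrib_left)
      also have "\<dots> \<le> (1 - \<delta>) * ?K + \<delta> * ?K"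
        using sz d1 dpos \<open>real ?d \<le> ?K\<close> by (intro add_mono mult_left_mono) auto
      finally show ?thesis using 1 by (simp add: algebra_simps)
    next
      case 2
      have "z $ i \<ge> 1" using hz 2 by simp
      then have "(1 - \<delta>) * z $ i \<ge> (1 - \<delta>) * 1" using d1 by (intro mult_left_mono) auto
      then show ?thesis using 2 yc by simp
    next
      case 3
      let ?R = "real_of_int (RI p e lam' \<alpha>')"
      have ne: "RegIneq lam' \<alpha>' \<noteq> RegIneq lam \<alpha>" using j 3 by simp
      have ge: "\<forall>T\<in>E. real_of_int (LI p \<alpha>' (bt e \<alpha> T)) \<ge> ?R"
        using reg_vertex(1)[OF p 3(3) 3(2) bt_BB[OF a lam]] unfolding E_def by simp
      have "\<exists>T\<in>E. real_of_int (LI p \<alpha>' (bt e \<alpha> T)) \<ge> ?R + 1"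
      proof (rule ccontr)
        assume "\<not> ?thesis"
        then have "\<forall>T\<in>E. LI p \<alpha>' (bt e \<alpha> T) \<le> RI p e lam' \<alpha>'" by force
        then have "\<forall>T. card T = lam \<longrightarrow> LI p \<alpha>' (bt e \<alpha> T) = RI p e lam' \<alpha>'"
          using reg_vertex(1)[OF p 3(3) 3(2) bt_BB[OF a lam]] unfolding E_def by force
        then have "lam' = lam \<and> \<alpha>' = \<alpha>" using reg_tight_unique[OF p a lam 3(3) 3(2)] by blast
        then show False using ne by simp
      qed
      then obtain T1 where T1: "T1 \<in> E" "real_of_int (LI p \<alpha>' (bt e \<alpha> T1)) \<ge> ?R + 1" by blast
      have avg: "(\<Sum>T\<in>E. (1 / N) * real_of_int (LI p \<alpha>' (bt e \<alpha> T))) \<ge> ?R + 1 / N"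
        using avg_bound[OF finE ge T1] unfolding N_def .
      have Rb: "?R \<le> Bd" unfolding Bd_def using reg_rhs_bound[OF p 3(3) 3(2)] .
      have R0: "?R \<ge> 0" unfolding RI_def by simp
      have s0: "(\<Sum>i\<in>UNIV. real p ^ \<alpha>' i) \<ge> 0" by (intro sum_nonneg) simp
      have "(\<Sum>i\<in>UNIV. real p ^ \<alpha>' i * y $ i) \<ge> (1 - \<delta>) * (?R + 1 / N) + \<delta> * 0"
        unfolding Ly Lz using avg d1 dpos s0 by (intro add_mono mult_left_mono) auto
      moreover have "\<delta> * (?R + 1 / N) \<le> \<delta> * (Bd + 1)"
      proof (rule mult_left_mono)
        have "1 / N \<le> 1" using N1 by simp
        then show "?R + 1 / N \<le> Bd + 1" using Rb by linarith
      qed (use dpos in auto)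
      moreover have "(1 - \<delta>) * (?R + 1 / N) = ?R + 1 / N - \<delta> * (?R + 1 / N)"
        by (simp only: left_diff_distrib mult_1)
      ultimately have "(\<Sum>i\<in>UNIV. real p ^ \<alpha>' i * y $ i) \<ge> ?R"
        using dB by linarith
      then show ?thesis using 3 RI_real[of lam' p e \<alpha>'] by simp
    qed
  qed
  have ynot: "y \<notin> polyh p e (ineq_list e)"
  proof
    assume "y \<in> polyh p e (ineq_list e)"
    moreover have "RegIneq lam \<alpha> \<in> ineq_list e" unfolding ineq_list_def using a lam by blast
    ultimately have hy: "holds p e (RegIneq lam \<alpha>) y" unfolding polyh_def by blast
    let ?R = "real_of_int (RI p e lam \<alpha>)"
    have "(\<Sum>i\<in>UNIV. real p ^ \<alpha> i * z $ i) = (\<Sum>T\<in>E. (1 / N) * ?R)"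
      unfolding Lz using bt_tight[OF a lam] unfolding E_def by simp
    also have "\<dots> = ?R" using Npos neE unfolding N_def by auto
    finally have Lzr: "(\<Sum>i\<in>UNIV. real p ^ \<alpha> i * z $ i) = ?R" .
    have "(\<Sum>i\<in>UNIV. real p ^ \<alpha> i) \<le> (\<Sum>i\<in>(UNIV::'n set). real p ^ ?m)"
      using reg_basic(2)[OF a lam] p by (intro sum_mono power_increasing) auto
    also have "\<dots> = real ?d * real p ^ ?m" by simp
    also have "\<dots> < ?R"
    proof -
      have l: "lam \<le> ?d" "lam \<ge> 1" using lam by auto
      have "?R = real ?d * real p ^ ?m + real lam * (real p - 1) * real p ^ ?m"
        unfolding RI_def using l by (simp add: of_nat_diff algebra_simps)
      moreover have "real lam * (real p - 1) * real p ^ ?m > 0" using l p by simp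
      ultimately show ?thesis by linarith
    qed
    finally have sl: "(\<Sum>i\<in>UNIV. real p ^ \<alpha> i) < ?R" .
    have "(\<Sum>i\<in>UNIV. real p ^ \<alpha> i * y $ i) = ?R - \<delta> * (?R - (\<Sum>i\<in>UNIV. real p ^ \<alpha> i))"
      unfolding Ly Lzr by (simp add: algebra_simps)
    also have "\<dots> < ?R" using dpos sl by simp
    finally have "(\<Sum>i\<in>UNIV. real p ^ \<alpha> i * y $ i) < ?R" .
    then show False using hy RI_real[of lam p e \<alpha>] by simp
  qed
  show ?thesis using yin ynot by blast
qed


lemma W_Low:
  fixes k :: "'n::finite"
  assumes p: "p \<ge> 2" and d3: "CARD('n) \<ge> 3" and e2: "e \<ge> 2"
  shows "\<exists>y. y \<in> polyh p e (ineq_list e - {LowIneq k}) \<and> y \<notin> polyh p e (ineq_list e)"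
proof -
  let ?d = "CARD('n)"
  define U where "U = UNIV - {k}"
  have finU: "finite U" by simp
  have cU: "card U = ?d - 1" unfolding U_def by simp
  define N where "N = real (card U)"
  have N2: "N \<ge> 2" unfolding N_def cU using d3 by simp
  have Nd: "N = real ?d - 1" unfolding N_def cU using d3 by (simp add: of_nat_diff)
  have "card U > 0" using cU d3 by simp
  then obtain i1 where i1: "i1 \<in> U" by (metis card_gt_0_iff ex_in_conv)
  have "card (U - {i1}) > 0" using cU d3 i1 by simp
  then obtain i2 where i2: "i2 \<in> U - {i1}" by (metis card_gt_0_iff ex_in_conv)
  define cv where "cv i = pv p (conc e i)" for i :: 'n
  define z where "z = (\<Sum>i\<in>U. (1 / N) *\<^sub>R cv i)"
  let ?H = "convex hull (pv p ` BB e :: (real^'n) set)"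
  have zH: "z \<in> ?H" unfolding z_def
  proof (rule convex_sum[OF finU convex_convex_hull])
    show "(\<Sum>i\<in>U. 1 / N) = 1" using N2 unfolding N_def by auto
    show "\<And>i. i \<in> U \<Longrightarrow> 0 \<le> 1 / N" using N2 by simp
    show "\<And>i. i \<in> U \<Longrightarrow> cv i \<in> ?H" unfolding cv_def using conc_BB by (intro hull_inc) auto
  qed
  have zP: "z \<in> polyh p e (ineq_list e)" using partA[OF p] zH by blast
  have zk: "z $ k = 1"
  proof -
    have "z $ k = (\<Sum>i\<in>U. (1 / N) * cv i $ k)" unfolding z_def by (simp add: sum_component)
    also have "\<dots> = (\<Sum>i\<in>U. (1 / N))" unfolding cv_def conc_def U_def by (intro sum.cong) auto
    also have "\<dots> = 1" using N2 unfolding N_def by auto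
    finally show ?thesis .
  qed
  define \<delta> where "\<delta> = 1 / (real ?d * real p ^ e)"
  have dpos: "\<delta> > 0" unfolding \<delta>_def using p by simp
  have dpe: "\<delta> * real p ^ e = 1 / real ?d" unfolding \<delta>_def using p by simp
  define y where "y = z - \<delta> *\<^sub>R axis k 1"
  have yc: "y $ i = z $ i - (if i = k then \<delta> else 0)" for i unfolding y_def by (simp add: axis_def)
  have Ly: "(\<Sum>i\<in>UNIV. a i * y $ i) = (\<Sum>i\<in>UNIV. a i * z $ i) - \<delta> * a k" for a
  proof -
    have "(\<Sum>i\<in>UNIV. a i * y $ i) = (\<Sum>i\<in>UNIV. a i * z $ i - (if i = k then \<delta> * a k else 0))"
      unfolding yc by (intro sum.cong) (auto simp: algebra_simps)
    then show ?thesis by (simp add: sum_subtractf)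
  qed
  have yin: "y \<in> polyh p e (ineq_list e - {LowIneq k})"
    unfolding polyh_def
  proof (intro CollectI ballI)
    fix j assume j: "j \<in> ineq_list e - {LowIneq k}"
    then have jL: "j \<in> ineq_list e" by simp
    have hz: "holds p e j z" using zP jL unfolding polyh_def by blast
    consider "j = SumIneq" | i where "j = LowIneq i"
      | lam' \<alpha>' where "j = RegIneq lam' \<alpha>'" "lam' \<in> {1..min e (?d - 1)}" "\<alpha>' \<in> regular_vectors lam' e"
      using jL unfolding ineq_list_def by auto
    then show "holds p e j y"
    proof cases
      case 1
      have "(\<Sum>i\<in>UNIV. 1 * y $ i) = (\<Sum>i\<in>UNIV. 1 * z $ i) - \<delta> * 1" by (rule Ly)
      then show ?thesis using hz 1 dpos by simp
    next
      case 2
      then have "i \<noteq> k" using j by auto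
      then show ?thesis using hz 2 yc by simp
    next
      case 3
      let ?R = "real_of_int (RI p e lam' \<alpha>')"
      have ge: "\<forall>i\<in>U. real_of_int (LI p \<alpha>' (conc e i)) \<ge> ?R"
        using reg_vertex(1)[OF p 3(3) 3(2) conc_BB] by simp
      have "\<exists>i\<in>U. real_of_int (LI p \<alpha>' (conc e i)) \<ge> ?R + 1"
      proof (rule ccontr)
        assume "\<not> ?thesis"
        then have "\<forall>i\<in>U. LI p \<alpha>' (conc e i) \<le> RI p e lam' \<alpha>'" by force
        then have tt: "\<forall>i\<in>U. LI p \<alpha>' (conc e i) = RI p e lam' \<alpha>'"
          using reg_vertex(1)[OF p 3(3) 3(2) conc_BB] by (meson order_antisym)
        let ?m = "mu e \<alpha>'"
        have "\<alpha>' i1 + conc e i1 i1 = ?m \<or> \<alpha>' i1 + conc e i1 i1 = ?m + 1"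
          using reg_vertex(2)[OF p 3(3) 3(2) conc_BB] tt i1 by metis
        moreover have "\<alpha>' i1 + conc e i2 i1 = ?m \<or> \<alpha>' i1 + conc e i2 i1 = ?m + 1"
        proof -
          have "RI p e lam' \<alpha>' = LI p \<alpha>' (conc e i2)" using tt i2 by auto
          then have "\<forall>i. \<alpha>' i + conc e i2 i = ?m \<or> \<alpha>' i + conc e i2 i = ?m + 1"
            by (rule reg_vertex(2)[OF p 3(3) 3(2) conc_BB])
          then show ?thesis by blast
        qed
        moreover have "conc e i1 i1 = e" "conc e i2 i1 = 0" using i2 unfolding conc_def by auto
        ultimately show False using e2 by auto
      qed
      then obtain i0 where i0: "i0 \<in> U" "real_of_int (LI p \<alpha>' (conc e i0)) \<ge> ?R + 1" by blast
      have avg: "(\<Sum>i\<in>U. (1 / N) * real_of_int (LI p \<alpha>' (conc e i))) \<ge> ?R + 1 / N"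
        using avg_bound[OF finU ge i0] unfolding N_def .
      have Lz: "(\<Sum>i\<in>UNIV. real p ^ \<alpha>' i * z $ i) = (\<Sum>i\<in>U. (1 / N) * real_of_int (LI p \<alpha>' (conc e i)))"
        unfolding z_def cv_def lin_comb LI_real ..
      have pk: "real p ^ \<alpha>' k \<le> real p ^ e"
        using reg_max_lt[OF 3(3), of k] p by (intro power_increasing) auto
      have "\<delta> * real p ^ \<alpha>' k \<le> \<delta> * real p ^ e" using pk dpos by simp
      moreover have "1 / real ?d < 1 / N" using Nd N2 by (simp add: frac_less2)
      ultimately have "\<delta> * real p ^ \<alpha>' k < 1 / N" using dpe by linarith
      then have "(\<Sum>i\<in>UNIV. real p ^ \<alpha>' i * y $ i) \<ge> ?R"
        using Ly[of "\<lambda>i. real p ^ \<alpha>' i"] Lz avg by linarith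
      then show ?thesis using 3 RI_real[of lam' p e \<alpha>'] by simp
    qed
  qed
  have ynot: "y \<notin> polyh p e (ineq_list e)"
  proof
    assume "y \<in> polyh p e (ineq_list e)"
    moreover have "LowIneq k \<in> ineq_list e" unfolding ineq_list_def by simp
    ultimately have "holds p e (LowIneq k) y" unfolding polyh_def by blast
    then show False using yc[of k] zk dpos by simp
  qed
  show ?thesis using yin ynot by blast
qed


lemma witness_nonlow:
  fixes j :: "'n::finite ineq"
  assumes p: "p \<ge> 2" and d2: "CARD('n) \<ge> 2" and e2: "e \<ge> 2"
    and j: "j \<in> ineq_list e" and nl: "j \<notin> range LowIneq"
  shows "\<exists>y. y \<in> polyh p e (ineq_list e - {j}) \<and> y \<notin> polyh p e (ineq_list e)"
proof -
  consider "j = SumIneq" | i where "j = LowIneq i"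
      | lam \<alpha> where "j = RegIneq lam \<alpha>" "lam \<in> {1..min e (CARD('n) - 1)}" "\<alpha> \<in> regular_vectors lam e"
    using j unfolding ineq_list_def by auto
  then show ?thesis
  proof cases
    case 1
    then show ?thesis using W_Sum[OF p d2, of e] e2 by auto
  next
    case 2
    then show ?thesis using nl by auto
  next
    case 3
    then show ?thesis using W_Reg[OF p d2 3(3) 3(2)] by simp
  qed
qed

lemma low_redundant_d2:
  assumes p: "p \<ge> 2" and e2: "e \<ge> 2" and d: "CARD('n::finite) = 2"
  shows "polyh p e ((ineq_list e :: 'n ineq set) - range LowIneq) \<subseteq> polyh p e (ineq_list e)"
proof
  fix x :: "real^'n" assume x: "x \<in> polyh p e (ineq_list e - range LowIneq)"
  show "x \<in> polyh p e (ineq_list e)" unfolding polyh_def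
  proof (intro CollectI ballI)
    fix j assume j: "j \<in> (ineq_list e :: 'n ineq set)"
    show "holds p e j x"
    proof (cases "j \<in> range LowIneq")
      case False
      then show ?thesis using x j unfolding polyh_def by blast
    next
      case True
      then obtain k where jk: "j = LowIneq k" by blast
      have "card (UNIV - {k}) = 1" using d by simp
      then obtain b where bU: "UNIV - {k} = {b}" by (meson card_1_singletonE)
      then have bk: "b \<noteq> k" by auto
      have U: "(UNIV :: 'n set) = {k, b}" using bU by auto
      have sumU: "(\<Sum>i\<in>UNIV. f i) = f k + f b" for f :: "'n \<Rightarrow> real"
        unfolding U using bk by simp
      define \<alpha> where "\<alpha> i = (if i = k then e - 1 else 0)" for i :: 'n
      have sa: "(\<Sum>i\<in>UNIV. \<alpha> i) = e - 1" unfolding \<alpha>_def by simp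
      have rk: "range \<alpha> = {e - 1, 0}" unfolding U \<alpha>_def using bk by auto
      have mn: "Min (range \<alpha>) = 0" unfolding rk by simp
      have mx: "Max (range \<alpha>) = e - 1" unfolding rk by simp
      obtain e1 where e1: "e = Suc e1" using e2 by (cases e) auto
      have ee: "e + (e - 1) = (e - 1) * 2 + 1" using e1 by simp
      have m1: "Max (range \<alpha>) * CARD('n) < e + (\<Sum>i\<in>UNIV. \<alpha> i)" unfolding mx sa d using e1 by simp
      have m2: "(e + (\<Sum>i\<in>UNIV. \<alpha> i)) mod CARD('n) = 1 mod CARD('n)" unfolding sa d ee by (rule mod_mult_self3)
      have reg: "\<alpha> \<in> regular_vectors 1 e" unfolding regular_vectors_def using mn m1 m2 by simp
      have l1: "(1::nat) \<in> {1..min e (CARD('n) - 1)}" using d e2 by simp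
      have "RegIneq 1 \<alpha> \<in> ineq_list e" unfolding ineq_list_def using reg l1 by blast
      then have hR: "holds p e (RegIneq 1 \<alpha>) x" using x unfolding polyh_def by blast
      have "SumIneq \<in> ineq_list e - range LowIneq" unfolding ineq_list_def by auto
      then have hS: "holds p e SumIneq x" using x unfolding polyh_def by blast
      have mu: "mu e \<alpha> = e - 1" unfolding mu_def sa d ee by simp
      let ?q = "real p ^ (e - 1)"
      have pe: "real p ^ (e - 1 + 1) = real p * ?q" by simp
      have R: "?q * x $ k + x $ b \<ge> real p * ?q + ?q"
        using hR unfolding holds.simps mu sumU d pe using bk unfolding \<alpha>_def by simp
      have S: "x $ k + x $ b \<le> 1 + real p * ?q"
      proof -
        have "real p ^ e = real p * ?q" unfolding e1 by simp
        then show ?thesis using hS unfolding holds.simps sumU d by simp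
      qed
      have q1: "?q > 1" using p e2 by (simp add: one_less_power)
      have "(?q - 1) * (x $ k - 1) \<ge> 0" using R S by (simp add: algebra_simps)
      then have "x $ k - 1 \<ge> 0" using q1 by (simp add: zero_le_mult_iff)
      then show ?thesis using jk by simp
    qed
  qed
qed


theorem theorem1p1:
  fixes p e :: nat
  assumes "prime p" and "e \<ge> 2" and "CARD('n::finite) \<ge> 2"
  shows "convex hull (vector_factorisations (p ^ e) :: (real^'n) set)
           = polyh p e (ineq_list e :: 'n ineq set)
       \<and> (CARD('n) \<ge> 3 \<longrightarrow>
            (\<forall>j\<in>(ineq_list e :: 'n ineq set).
               polyh p e (ineq_list e - {j}) \<noteq> polyh p e (ineq_list e)))
       \<and> (CARD('n) = 2 \<longrightarrow>
            polyh p e ((ineq_list e :: 'n ineq set) - range LowIneq) = polyh p e (ineq_list e)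
          \<and> (\<forall>j\<in>(ineq_list e :: 'n ineq set) - range LowIneq.
               polyh p e (ineq_list e - range LowIneq - {j}) \<noteq> polyh p e (ineq_list e)))"
proof -
  have p: "p \<ge> 2" using assms(1) prime_ge_2_nat by blast
  have e1: "e \<ge> 1" using assms(2) by simp
  have P1: "convex hull (vector_factorisations (p ^ e) :: (real^'n) set) = polyh p e (ineq_list e :: 'n ineq set)"
    unfolding VF[OF assms(1)] using partA[OF p] partB[OF p e1 assms(3)] by blast
  have P2: "CARD('n) \<ge> 3 \<longrightarrow>
            (\<forall>j\<in>(ineq_list e :: 'n ineq set).
               polyh p e (ineq_list e - {j}) \<noteq> polyh p e (ineq_list e))"
  proof (intro impI ballI)
    fix j :: "'n ineq" assume d3: "CARD('n) \<ge> 3" and j: "j \<in> ineq_list e"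
    have "\<exists>y. y \<in> polyh p e (ineq_list e - {j}) \<and> y \<notin> polyh p e (ineq_list e)"
    proof (cases "j \<in> range LowIneq")
      case True
      then obtain k where "j = LowIneq k" by blast
      then show ?thesis using W_Low[OF p d3 assms(2), of k] by simp
    next
      case False
      then show ?thesis using witness_nonlow[OF p assms(3) assms(2) j] by blast
    qed
    then show "polyh p e (ineq_list e - {j}) \<noteq> polyh p e (ineq_list e)" by blast
  qed
  have P3: "CARD('n) = 2 \<longrightarrow>
            polyh p e ((ineq_list e :: 'n ineq set) - range LowIneq) = polyh p e (ineq_list e)
          \<and> (\<forall>j\<in>(ineq_list e :: 'n ineq set) - range LowIneq.
               polyh p e (ineq_list e - range LowIneq - {j}) \<noteq> polyh p e (ineq_list e))"
  proof (intro impI conjI ballI)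
    assume d: "CARD('n) = 2"
    show "polyh p e ((ineq_list e :: 'n ineq set) - range LowIneq) = polyh p e (ineq_list e)"
      using low_redundant_d2[OF p assms(2) d] polyh_anti[of "ineq_list e - range LowIneq" "ineq_list e" p e]
      by blast
    fix j :: "'n ineq" assume j: "j \<in> ineq_list e - range LowIneq"
    obtain y where y: "y \<in> polyh p e (ineq_list e - {j})" "y \<notin> polyh p e (ineq_list e)"
      using witness_nonlow[OF p assms(3) assms(2)] j by blast
    have "polyh p e (ineq_list e - {j}) \<subseteq> polyh p e (ineq_list e - range LowIneq - {j})"
      by (rule polyh_anti) auto
    then show "polyh p e (ineq_list e - range LowIneq - {j}) \<noteq> polyh p e (ineq_list e)" using y by blast
  qed
  show ?thesis using P1 P2 P3 by blast
qed


end
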